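(* Let $(M,\mathcal{X})\models\mathrm{RCA}_0$, let $\mathcal{U}$ be an ultrafilter on the Boolean algebra $\mathcal{X}$ all of whose elements are cofinal in $M$, and let $\mathcal{F}/\mathcal{U}$ be the (first-order part of the) second-order restricted ultrapower. If $(M,\mathcal{X})$ satisfies $\Sigma_n$-comprehension for some $n\in\mathbb{N}$, then $M\preccurlyeq_{\Sigma_{n+2}}\mathcal{F}/\mathcal{U}$, i.e. every first-order $\Sigma_{n+2}$ formula with parameters from $M$ has the same truth value in $M$ and in $\mathcal{F}/\mathcal{U}$.
   Context: $\mathrm{RCA}_0$ is the second-order system with Robinson arithmetic, $\Sigma^0_1$-induction and $\Delta^0_1$-comprehension. $(M,\mathcal{X})$ satisfies $\Sigma_n$-comprehension if every subset of $M$ defined by a first-order $\Sigma_n$ formula with parameters from $M$ belongs to $\mathcal{X}$. Second-order restricted ultrapower: let $\mathcal{F}$ be the set of all total functions $M\to M$ belonging to $\mathcal{X}$; for $f,g\in\mathcal{F}$ put $f\sim g$ iff $\{i\in M: f(i)=g(i)\}\in\mathcal{U}$; $\mathcal{F}/\mathcal{U}$ is the set of classes $[f]$, with $[f]+[g]=[f+g]$, $[f]\times[g]=[f\times g]$ (pointwise), $[f]<[g]$ iff $\{i: f(i)<g(i)\}\in\mathcal{U}$. $M$ embeds into $\mathcal{F}/\mathcal{U}$ via constant functions. *)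

theory Defs
  imports "HOL-Library.FuncSet"
begin

record 'a astr =
  carr :: "'a set"
  zr :: 'a
  on :: 'a
  pl :: "'a \<Rightarrow> 'a \<Rightarrow> 'a"
  tm :: "'a \<Rightarrow> 'a \<Rightarrow> 'a"
  ls :: "'a \<Rightarrow> 'a \<Rightarrow> bool"

datatype trm = Var nat | Zero | One | Plus trm trm | Times trm trm

datatype fm =
    Eq trm trm | Lt trm trm
  | Mem trm nat
  | Neg fm | Conj fm fm | Disj fm fm | Impl fm fm
  | Ex nat fm | All nat fm
  | BEx nat trm fm
  | BAll nat trm fm
  | SEx nat fm | SAll nat fm

fun ev :: "'a astr \<Rightarrow> (nat \<Rightarrow> 'a) \<Rightarrow> trm \<Rightarrow> 'a" where
  "ev M e (Var i) = e i"
| "ev M e Zero = zr M"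
| "ev M e One = on M"
| "ev M e (Plus s t) = pl M (ev M e s) (ev M e t)"
| "ev M e (Times s t) = tm M (ev M e s) (ev M e t)"

fun sat :: "'a astr \<Rightarrow> 'a set set \<Rightarrow> (nat \<Rightarrow> 'a) \<Rightarrow> (nat \<Rightarrow> 'a set) \<Rightarrow> fm \<Rightarrow> bool" where
  "sat M Xs e S (Eq s t) = (ev M e s = ev M e t)"
| "sat M Xs e S (Lt s t) = ls M (ev M e s) (ev M e t)"
| "sat M Xs e S (Mem t j) = (ev M e t \<in> S j)"
| "sat M Xs e S (Neg \<phi>) = (\<not> sat M Xs e S \<phi>)"
| "sat M Xs e S (Conj \<phi> \<psi>) = (sat M Xs e S \<phi> \<and> sat M Xs e S \<psi>)"
| "sat M Xs e S (Disj \<phi> \<psi>) = (sat M Xs e S \<phi> \<or> sat M Xs e S \<psi>)"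
| "sat M Xs e S (Impl \<phi> \<psi>) = (sat M Xs e S \<phi> \<longrightarrow> sat M Xs e S \<psi>)"
| "sat M Xs e S (Ex x \<phi>) = (\<exists>a\<in>carr M. sat M Xs (e(x := a)) S \<phi>)"
| "sat M Xs e S (All x \<phi>) = (\<forall>a\<in>carr M. sat M Xs (e(x := a)) S \<phi>)"
| "sat M Xs e S (BEx x t \<phi>) =
     (\<exists>a\<in>carr M. ls M a (ev M e t) \<and> sat M Xs (e(x := a)) S \<phi>)"
| "sat M Xs e S (BAll x t \<phi>) =
     (\<forall>a\<in>carr M. ls M a (ev M e t) \<longrightarrow> sat M Xs (e(x := a)) S \<phi>)"
| "sat M Xs e S (SEx j \<phi>) = (\<exists>A\<in>Xs. sat M Xs e (S(j := A)) \<phi>)"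
| "sat M Xs e S (SAll j \<phi>) = (\<forall>A\<in>Xs. sat M Xs e (S(j := A)) \<phi>)"

fun delta0 :: "fm \<Rightarrow> bool" where
  "delta0 (Eq s t) = True"
| "delta0 (Lt s t) = True"
| "delta0 (Mem t j) = True"
| "delta0 (Neg \<phi>) = delta0 \<phi>"
| "delta0 (Conj \<phi> \<psi>) = (delta0 \<phi> \<and> delta0 \<psi>)"
| "delta0 (Disj \<phi> \<psi>) = (delta0 \<phi> \<and> delta0 \<psi>)"
| "delta0 (Impl \<phi> \<psi>) = (delta0 \<phi> \<and> delta0 \<psi>)"
| "delta0 (BEx x t \<phi>) = delta0 \<phi>"
| "delta0 (BAll x t \<phi>) = delta0 \<phi>"
| "delta0 (Ex x \<phi>) = False"
| "delta0 (All x \<phi>) = False"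
| "delta0 (SEx j \<phi>) = False"
| "delta0 (SAll j \<phi>) = False"

text \<open>Sigma_n / Pi_n formulas (set parameters allowed as atoms, no set quantifiers):
  blocks of unbounded quantifiers in front of a Delta_0 matrix.\<close>
inductive sigma :: "nat \<Rightarrow> fm \<Rightarrow> bool" and pi :: "nat \<Rightarrow> fm \<Rightarrow> bool" where
  sigma0: "delta0 \<phi> \<Longrightarrow> sigma 0 \<phi>"
| pi0: "delta0 \<phi> \<Longrightarrow> pi 0 \<phi>"
| sigma_pi: "pi n \<phi> \<Longrightarrow> sigma (Suc n) \<phi>"
| sigma_ex: "sigma (Suc n) \<phi> \<Longrightarrow> sigma (Suc n) (Ex x \<phi>)"
| pi_sigma: "sigma n \<phi> \<Longrightarrow> pi (Suc n) \<phi>"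
| pi_all: "pi (Suc n) \<phi> \<Longrightarrow> pi (Suc n) (All x \<phi>)"

fun first_order :: "fm \<Rightarrow> bool" where
  "first_order (Eq s t) = True"
| "first_order (Lt s t) = True"
| "first_order (Mem t j) = False"
| "first_order (Neg \<phi>) = first_order \<phi>"
| "first_order (Conj \<phi> \<psi>) = (first_order \<phi> \<and> first_order \<psi>)"
| "first_order (Disj \<phi> \<psi>) = (first_order \<phi> \<and> first_order \<psi>)"
| "first_order (Impl \<phi> \<psi>) = (first_order \<phi> \<and> first_order \<psi>)"
| "first_order (BEx x t \<phi>) = first_order \<phi>"
| "first_order (BAll x t \<phi>) = first_order \<phi>"
| "first_order (Ex x \<phi>) = first_order \<phi>"
| "first_order (All x \<phi>) = first_order \<phi>"
| "first_order (SEx j \<phi>) = False"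
| "first_order (SAll j \<phi>) = False"

definition is_astr :: "'a astr \<Rightarrow> bool" where
  "is_astr M \<longleftrightarrow> zr M \<in> carr M \<and> on M \<in> carr M \<and>
     (\<forall>a\<in>carr M. \<forall>b\<in>carr M. pl M a b \<in> carr M \<and> tm M a b \<in> carr M)"

definition robinson :: "'a astr \<Rightarrow> bool" where
  "robinson M \<longleftrightarrow> (\<forall>x\<in>carr M. \<forall>y\<in>carr M.
      pl M x (on M) \<noteq> zr M
    \<and> (pl M x (on M) = pl M y (on M) \<longrightarrow> x = y)
    \<and> (x \<noteq> zr M \<longrightarrow> (\<exists>z\<in>carr M. x = pl M z (on M)))
    \<and> pl M x (zr M) = x
    \<and> pl M x (pl M y (on M)) = pl M (pl M x y) (on M)
    \<and> tm M x (zr M) = zr M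
    \<and> tm M x (pl M y (on M)) = pl M (tm M x y) x
    \<and> (ls M x y \<longleftrightarrow> (\<exists>z\<in>carr M. pl M x (pl M z (on M)) = y)))"

definition env_ok :: "'a astr \<Rightarrow> 'a set set \<Rightarrow> (nat \<Rightarrow> 'a) \<Rightarrow> (nat \<Rightarrow> 'a set) \<Rightarrow> bool" where
  "env_ok M Xs e S \<longleftrightarrow> (\<forall>v. e v \<in> carr M) \<and> (\<forall>j. S j \<in> Xs)"

definition sigma1_ind :: "'a astr \<Rightarrow> 'a set set \<Rightarrow> bool" where
  "sigma1_ind M Xs \<longleftrightarrow> (\<forall>\<phi> x e S. sigma 1 \<phi> \<and> env_ok M Xs e S \<and>
     sat M Xs (e(x := zr M)) S \<phi> \<and>
     (\<forall>a\<in>carr M. sat M Xs (e(x := a)) S \<phi> \<longrightarrow> sat M Xs (e(x := pl M a (on M))) S \<phi>)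
     \<longrightarrow> (\<forall>a\<in>carr M. sat M Xs (e(x := a)) S \<phi>))"

definition delta1_comp :: "'a astr \<Rightarrow> 'a set set \<Rightarrow> bool" where
  "delta1_comp M Xs \<longleftrightarrow> (\<forall>\<phi> \<psi> x e S. sigma 1 \<phi> \<and> pi 1 \<psi> \<and> env_ok M Xs e S \<and>
     (\<forall>a\<in>carr M. sat M Xs (e(x := a)) S \<phi> \<longleftrightarrow> sat M Xs (e(x := a)) S \<psi>)
     \<longrightarrow> {a\<in>carr M. sat M Xs (e(x := a)) S \<phi>} \<in> Xs)"

definition rca0 :: "'a astr \<Rightarrow> 'a set set \<Rightarrow> bool" where
  "rca0 M Xs \<longleftrightarrow> is_astr M \<and> Xs \<subseteq> Pow (carr M) \<and> robinson M \<and>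
     sigma1_ind M Xs \<and> delta1_comp M Xs"

definition sigma_comp :: "'a astr \<Rightarrow> 'a set set \<Rightarrow> nat \<Rightarrow> bool" where
  "sigma_comp M Xs n \<longleftrightarrow> (\<forall>\<phi> x e. sigma n \<phi> \<and> first_order \<phi> \<and> (\<forall>v. e v \<in> carr M)
     \<longrightarrow> {a\<in>carr M. sat M Xs (e(x := a)) (\<lambda>_. {}) \<phi>} \<in> Xs)"

definition ultrafilter_on :: "'a astr \<Rightarrow> 'a set set \<Rightarrow> 'a set set \<Rightarrow> bool" where
  "ultrafilter_on M Xs U \<longleftrightarrow> U \<subseteq> Xs \<and> carr M \<in> U \<and> {} \<notin> U \<and>
     (\<forall>A\<in>U. \<forall>B\<in>U. A \<inter> B \<in> U) \<and>
     (\<forall>A\<in>U. \<forall>B\<in>Xs. A \<subseteq> B \<longrightarrow> B \<in> U) \<and>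
     (\<forall>A\<in>Xs. A \<in> U \<or> carr M - A \<in> U)"

definition cofinal :: "'a astr \<Rightarrow> 'a set \<Rightarrow> bool" where
  "cofinal M A \<longleftrightarrow> (\<forall>a\<in>carr M. \<exists>b\<in>A. ls M a b)"

text \<open>Functions are coded in M as sets of pairs, with the RCA_0 pairing
  (i,j) = (i+j)*(i+j) + i.\<close>
definition pair_code :: "'a astr \<Rightarrow> 'a \<Rightarrow> 'a \<Rightarrow> 'a" where
  "pair_code M i j = pl M (tm M (pl M i j) (pl M i j)) i"

definition fun_code :: "'a astr \<Rightarrow> ('a \<Rightarrow> 'a) \<Rightarrow> 'a set" where
  "fun_code M f = {pair_code M i (f i) | i. i \<in> carr M}"

definition Fs :: "'a astr \<Rightarrow> 'a set set \<Rightarrow> ('a \<Rightarrow> 'a) set" where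
  "Fs M Xs = {f. f \<in> carr M \<rightarrow>\<^sub>E carr M \<and> fun_code M f \<in> Xs}"

definition ueq :: "'a astr \<Rightarrow> 'a set set \<Rightarrow> ('a \<Rightarrow> 'a) \<Rightarrow> ('a \<Rightarrow> 'a) \<Rightarrow> bool" where
  "ueq M U f g \<longleftrightarrow> {i\<in>carr M. f i = g i} \<in> U"

definition ucls :: "'a astr \<Rightarrow> 'a set set \<Rightarrow> 'a set set \<Rightarrow> ('a \<Rightarrow> 'a) \<Rightarrow> ('a \<Rightarrow> 'a) set" where
  "ucls M Xs U f = {g \<in> Fs M Xs. ueq M U f g}"

definition urep :: "('a \<Rightarrow> 'a) set \<Rightarrow> ('a \<Rightarrow> 'a)" where
  "urep C = (SOME f. f \<in> C)"

definition ultrapower :: "'a astr \<Rightarrow> 'a set set \<Rightarrow> 'a set set \<Rightarrow> ('a \<Rightarrow> 'a) set astr" where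
  "ultrapower M Xs U = \<lparr>
     carr = ucls M Xs U ` Fs M Xs,
     zr = ucls M Xs U (\<lambda>i\<in>carr M. zr M),
     on = ucls M Xs U (\<lambda>i\<in>carr M. on M),
     pl = (\<lambda>C D. ucls M Xs U (\<lambda>i\<in>carr M. pl M (urep C i) (urep D i))),
     tm = (\<lambda>C D. ucls M Xs U (\<lambda>i\<in>carr M. tm M (urep C i) (urep D i))),
     ls = (\<lambda>C D. {i\<in>carr M. ls M (urep C i) (urep D i)} \<in> U) \<rparr>"

definition uemb :: "'a astr \<Rightarrow> 'a set set \<Rightarrow> 'a set set \<Rightarrow> 'a \<Rightarrow> ('a \<Rightarrow> 'a) set" where
  "uemb M Xs U a = ucls M Xs U (\<lambda>i\<in>carr M. a)"

end

theory Submission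
  imports Defs
begin

locale base =
  fixes M :: "'a astr" and Xs :: "'a set set" and U :: "'a set set"
  assumes rca: "rca0 M Xs" and uf: "ultrafilter_on M Xs U"
begin

abbreviation "C \<equiv> carr M"
abbreviation "add \<equiv> pl M"
abbreviation "mul \<equiv> tm M"
abbreviation "z0 \<equiv> zr M"
abbreviation "o1 \<equiv> on M"
abbreviation "lt \<equiv> ls M"

lemma astr: "is_astr M" using rca unfolding rca0_def by auto
lemma z0C[simp]: "z0 \<in> C" using astr unfolding is_astr_def by auto
lemma o1C[simp]: "o1 \<in> C" using astr unfolding is_astr_def by auto
lemma addC[simp]: "a \<in> C \<Longrightarrow> b \<in> C \<Longrightarrow> add a b \<in> C" using astr unfolding is_astr_def by auto
lemma mulC[simp]: "a \<in> C \<Longrightarrow> b \<in> C \<Longrightarrow> mul a b \<in> C" using astr unfolding is_astr_def by auto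
lemma XsC: "Xs \<subseteq> Pow C" using rca unfolding rca0_def by auto
lemma CXs[simp]: "C \<in> Xs" using uf unfolding ultrafilter_on_def by auto
lemma rob: "robinson M" using rca unfolding rca0_def by auto

lemma A1[simp]: "x \<in> C \<Longrightarrow> add x o1 \<noteq> z0" using rob unfolding robinson_def by blast
lemma A2[simp]: "x \<in> C \<Longrightarrow> y \<in> C \<Longrightarrow> add x o1 = add y o1 \<longleftrightarrow> x = y" using rob unfolding robinson_def by blast
lemma A3: "x \<in> C \<Longrightarrow> x \<noteq> z0 \<Longrightarrow> \<exists>z\<in>C. x = add z o1" using rob unfolding robinson_def by blast
lemma A4[simp]: "x \<in> C \<Longrightarrow> add x z0 = x" using rob unfolding robinson_def by blast
lemma A5: "x \<in> C \<Longrightarrow> y \<in> C \<Longrightarrow> add x (add y o1) = add (add x y) o1" using rob unfolding robinson_def by blast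
lemma M1[simp]: "x \<in> C \<Longrightarrow> mul x z0 = z0" using rob unfolding robinson_def by blast
lemma M2: "x \<in> C \<Longrightarrow> y \<in> C \<Longrightarrow> mul x (add y o1) = add (mul x y) x" using rob unfolding robinson_def by blast
lemma L: "x \<in> C \<Longrightarrow> y \<in> C \<Longrightarrow> lt x y \<longleftrightarrow> (\<exists>z\<in>C. add x (add z o1) = y)" using rob unfolding robinson_def by blast

lemma delta0_sigma1: "delta0 \<phi> \<Longrightarrow> sigma (Suc 0) \<phi>"
  using sigma_pi[OF pi0] by simp
lemma delta0_pi1: "delta0 \<phi> \<Longrightarrow> pi (Suc 0) \<phi>"
  using pi_sigma[OF sigma0] by simp

lemma induct_fmS:
  assumes "sigma (Suc 0) \<phi>" "\<forall>v. e v \<in> C" "\<forall>j. S j \<in> Xs"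
    "\<And>a. a\<in>C \<Longrightarrow> sat M Xs (e(x:=a)) S \<phi> = P a" "P z0"
    "\<And>a. a\<in>C \<Longrightarrow> P a \<Longrightarrow> P (add a o1)" "a \<in> C"
  shows "P a"
proof -
  have "sigma1_ind M Xs" using rca unfolding rca0_def by auto
  then have "\<forall>a\<in>C. sat M Xs (e(x:=a)) S \<phi>"
    unfolding sigma1_ind_def
    apply (elim allE[of _ \<phi>] allE[of _ x] allE[of _ e] allE[of _ "S"])
    using assms by (auto simp: env_ok_def)
  then show ?thesis using assms by auto
qed

lemma induct_fm:
  assumes "sigma (Suc 0) \<phi>" "\<forall>v. e v \<in> C"
    "\<And>a. a\<in>C \<Longrightarrow> sat M Xs (e(x:=a)) (\<lambda>_. C) \<phi> = P a" "P z0"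
    "\<And>a. a\<in>C \<Longrightarrow> P a \<Longrightarrow> P (add a o1)" "a \<in> C"
  shows "P a"
  by (rule induct_fmS[where S="\<lambda>_. C"]) (use assms in auto)

lemma add0l[simp]: "x \<in> C \<Longrightarrow> add z0 x = x"
  by (rule induct_fm[where \<phi>="Eq (Plus Zero (Var 0)) (Var 0)" and e="\<lambda>_. z0" and x=0
        and P="\<lambda>x. add z0 x = x"])
     (auto intro!: delta0_sigma1 simp: A5)

lemma succl: "x \<in> C \<Longrightarrow> y \<in> C \<Longrightarrow> add (add x o1) y = add (add x y) o1"
  by (rule induct_fm[where \<phi>="Eq (Plus (Plus (Var 1) One) (Var 0)) (Plus (Plus (Var 1) (Var 0)) One)"
        and e="(\<lambda>_. z0)(1:=x)" and x=0 and P="\<lambda>y. add (add x o1) y = add (add x y) o1"])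
     (auto intro!: delta0_sigma1 simp: A5)

lemma add_comm: "x \<in> C \<Longrightarrow> y \<in> C \<Longrightarrow> add x y = add y x"
  by (rule induct_fm[where \<phi>="Eq (Plus (Var 1) (Var 0)) (Plus (Var 0) (Var 1))"
        and e="(\<lambda>_. z0)(1:=x)" and x=0 and P="\<lambda>y. add x y = add y x"])
     (auto intro!: delta0_sigma1 simp: A5 succl)

lemma add_assoc: "x \<in> C \<Longrightarrow> y \<in> C \<Longrightarrow> w \<in> C \<Longrightarrow> add (add x y) w = add x (add y w)"
  by (rule induct_fm[where \<phi>="Eq (Plus (Plus (Var 1) (Var 2)) (Var 0)) (Plus (Var 1) (Plus (Var 2) (Var 0)))"
        and e="(\<lambda>_. z0)(1:=x,2:=y)" and x=0 and P="\<lambda>w. add (add x y) w = add x (add y w)"])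
     (auto intro!: delta0_sigma1 simp: A5)

lemma add_lcomm: "x \<in> C \<Longrightarrow> y \<in> C \<Longrightarrow> w \<in> C \<Longrightarrow> add x (add y w) = add y (add x w)"
  by (metis add_assoc add_comm)

lemmas add_ac = add_assoc add_comm add_lcomm

lemma add_cancel: "x \<in> C \<Longrightarrow> y \<in> C \<Longrightarrow> w \<in> C \<Longrightarrow> add x w = add y w \<longleftrightarrow> x = y"
proof -
  assume xy: "x \<in> C" "y \<in> C" "w \<in> C"
  have "add x w = add y w \<longrightarrow> x = y"
    by (rule induct_fm[where \<phi>="Impl (Eq (Plus (Var 1) (Var 0)) (Plus (Var 2) (Var 0))) (Eq (Var 1) (Var 2))"
        and e="(\<lambda>_. z0)(1:=x,2:=y)" and x=0 and P="\<lambda>w. add x w = add y w \<longrightarrow> x = y"])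
     (use xy in \<open>auto intro!: delta0_sigma1 simp: A5\<close>)
  then show ?thesis by auto
qed

lemma add_cancel_l: "x \<in> C \<Longrightarrow> y \<in> C \<Longrightarrow> w \<in> C \<Longrightarrow> add w x = add w y \<longleftrightarrow> x = y"
  using add_cancel add_comm by metis

lemma mul0l[simp]: "x \<in> C \<Longrightarrow> mul z0 x = z0"
  by (rule induct_fm[where \<phi>="Eq (Times Zero (Var 0)) Zero" and e="\<lambda>_. z0" and x=0
        and P="\<lambda>x. mul z0 x = z0"])
     (auto intro!: delta0_sigma1 simp: M2)

lemma mulsuccl: "x \<in> C \<Longrightarrow> y \<in> C \<Longrightarrow> mul (add x o1) y = add (mul x y) y"
  by (rule induct_fm[where \<phi>="Eq (Times (Plus (Var 1) One) (Var 0)) (Plus (Times (Var 1) (Var 0)) (Var 0))"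
        and e="(\<lambda>_. z0)(1:=x)" and x=0 and P="\<lambda>y. mul (add x o1) y = add (mul x y) y"])
     (auto intro!: delta0_sigma1 simp: M2 A5[symmetric] add_ac)

lemma mul_comm: "x \<in> C \<Longrightarrow> y \<in> C \<Longrightarrow> mul x y = mul y x"
  by (rule induct_fm[where \<phi>="Eq (Times (Var 1) (Var 0)) (Times (Var 0) (Var 1))"
        and e="(\<lambda>_. z0)(1:=x)" and x=0 and P="\<lambda>y. mul x y = mul y x"])
     (auto intro!: delta0_sigma1 simp: M2 mulsuccl)

lemma distl: assumes "x \<in> C" "y \<in> C" "w \<in> C" shows "mul x (add y w) = add (mul x y) (mul x w)"
proof (rule induct_fm[where \<phi>="Eq (Times (Var 1) (Plus (Var 2) (Var 0))) (Plus (Times (Var 1) (Var 2)) (Times (Var 1) (Var 0)))"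
        and e="(\<lambda>_. z0)(1:=x,2:=y)" and x=0 and P="\<lambda>w. mul x (add y w) = add (mul x y) (mul x w)"])
  fix a assume a: "a \<in> C" and IH: "mul x (add y a) = add (mul x y) (mul x a)"
  have "mul x (add y (add a o1)) = mul x (add (add y a) o1)" using a assms by (simp add: A5)
  also have "\<dots> = add (mul x (add y a)) x" using a assms by (simp add: M2)
  also have "\<dots> = add (add (mul x y) (mul x a)) x" using IH by simp
  also have "\<dots> = add (mul x y) (add (mul x a) x)" using a assms by (simp add: add_assoc)
  also have "\<dots> = add (mul x y) (mul x (add a o1))" using a assms by (simp add: M2)
  finally show "mul x (add y (add a o1)) = add (mul x y) (mul x (add a o1))" .
qed (use assms in \<open>auto intro!: delta0_sigma1\<close>)

lemma distr: "x \<in> C \<Longrightarrow> y \<in> C \<Longrightarrow> w \<in> C \<Longrightarrow> mul (add y w) x = add (mul y x) (mul w x)"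
  using distl mul_comm by simp

lemma mul1[simp]: "x \<in> C \<Longrightarrow> mul x o1 = x"
  using M2[of x z0] by simp
lemma mul1l[simp]: "x \<in> C \<Longrightarrow> mul o1 x = x"
  using mul1 mul_comm by simp

lemma mul_ac: "x \<in> C \<Longrightarrow> y \<in> C \<Longrightarrow> mul x y = mul y x" by (rule mul_comm)

definition le :: "'a \<Rightarrow> 'a \<Rightarrow> bool" where "le a b \<longleftrightarrow> (\<exists>z\<in>C. add a z = b)"

lemma lt_succ: assumes "a \<in> C" "b \<in> C" shows "lt a (add b o1) \<longleftrightarrow> lt a b \<or> a = b"
proof
  assume "lt a (add b o1)"
  then obtain z where z: "z \<in> C" "add a (add z o1) = add b o1" using L assms by auto
  then have "add a z = b" using assms by (simp add: A5)
  then show "lt a b \<or> a = b"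
  proof (cases "z = z0")
    case False
    then obtain z' where "z' \<in> C" "z = add z' o1" using A3 z by auto
    then show ?thesis using \<open>add a z = b\<close> L assms by auto
  qed (use assms in auto)
next
  assume "lt a b \<or> a = b"
  then show "lt a (add b o1)"
  proof
    assume "lt a b"
    then obtain z where z: "z \<in> C" "add a (add z o1) = b" using L assms by auto
    then have "add a (add (add z o1) o1) = add b o1" using assms by (simp add: A5)
    then show ?thesis using L assms z by auto
  next
    assume "a = b" then show ?thesis using L assms by (auto intro!: bexI[of _ z0])
  qed
qed

lemma not_lt0[simp]: "a \<in> C \<Longrightarrow> \<not> lt a z0"
  using L[of a z0] by (auto simp: A5)

lemma le_lt: "a \<in> C \<Longrightarrow> b \<in> C \<Longrightarrow> le a b \<longleftrightarrow> lt a (add b o1)"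
  unfolding le_def using L[of a "add b o1"] by (auto simp: A5)

lemma le_lt': "a \<in> C \<Longrightarrow> b \<in> C \<Longrightarrow> le a b \<longleftrightarrow> lt a b \<or> a = b"
  using le_lt lt_succ by auto

lemma lt_irrefl[simp]: "a \<in> C \<Longrightarrow> \<not> lt a a"
proof
  assume a: "a \<in> C" "lt a a"
  then obtain z where z: "z \<in> C" "add a (add z o1) = a" using L by auto
  then have "add a (add z o1) = add a z0" using a by simp
  then show False using add_cancel_l a z by (metis A1 addC o1C z0C)
qed

lemma lt_trans: assumes "a \<in> C" "b \<in> C" "c \<in> C" "lt a b" "lt b c" shows "lt a c"
proof -
  obtain z where z: "z \<in> C" "add a (add z o1) = b" using L assms by auto
  obtain w where w: "w \<in> C" "add b (add w o1) = c" using L assms by auto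
  have "c = add (add a (add z o1)) (add w o1)" using z w by simp
  then have "add a (add (add (add z o1) w) o1) = c" using z(1) w(1) assms(1-3) by (simp add: add_ac)
  then show ?thesis using L[of a c] assms z w by auto
qed

lemma trich: assumes "a \<in> C" "b \<in> C" shows "lt a b \<or> a = b \<or> lt b a"
proof (rule induct_fm[where \<phi>="Disj (Lt (Var 0) (Var 1)) (Disj (Eq (Var 0) (Var 1)) (Lt (Var 1) (Var 0)))"
        and e="(\<lambda>_. z0)(1:=b)" and x=0 and P="\<lambda>a. lt a b \<or> a = b \<or> lt b a"])
  show "lt z0 b \<or> z0 = b \<or> lt b z0"
  proof (cases "b = z0")
    case False
    then obtain z where "z \<in> C" "b = add z o1" using A3 assms by auto
    then show ?thesis using L[of z0 b] assms by auto
  qed simp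
next
  fix a assume a: "a \<in> C" and IH: "lt a b \<or> a = b \<or> lt b a"
  show "lt (add a o1) b \<or> add a o1 = b \<or> lt b (add a o1)"
  proof -
    { assume "lt a b"
      then obtain z where z: "z \<in> C" "add a (add z o1) = b" using L assms a by auto
      have ?thesis
      proof (cases "z = z0")
        case True then show ?thesis using z a by simp
      next
        case False
        then obtain z' where z': "z' \<in> C" "z = add z' o1" using A3 z by auto
        have "add (add a o1) (add z' o1) = b" using z z' a by (simp add: add_ac)
        then show ?thesis using L[of "add a o1" b] z' a assms by auto
      qed }
    moreover
    { assume "a = b \<or> lt b a" then have ?thesis using lt_succ a assms by auto }
    ultimately show ?thesis using IH by auto
  qed
qed (use assms in \<open>auto intro!: delta0_sigma1\<close>)

lemma le_add: "a \<in> C \<Longrightarrow> b \<in> C \<Longrightarrow> le a (add a b)"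
  unfolding le_def by auto
lemma le_add2: "a \<in> C \<Longrightarrow> b \<in> C \<Longrightarrow> le b (add a b)"
  unfolding le_def using add_comm by (auto intro!: bexI[of _ a])
lemma le_trans: "a \<in> C \<Longrightarrow> b \<in> C \<Longrightarrow> c \<in> C \<Longrightarrow> le a b \<Longrightarrow> le b c \<Longrightarrow> le a c"
  unfolding le_def by (metis addC add_assoc)
lemma le_refl: "a \<in> C \<Longrightarrow> le a a" unfolding le_def by (auto intro!: bexI[of _ z0])
lemma le0: "a \<in> C \<Longrightarrow> le z0 a" unfolding le_def by auto
lemma le_mul: assumes "a \<in> C" "b \<in> C" "b \<noteq> z0" shows "le a (mul a b)"
proof -
  obtain b' where "b' \<in> C" "b = add b' o1" using A3 assms by auto
  then show ?thesis using assms M2 le_add2[of "mul a b'" a] by simp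
qed

lemma add_eq0: "a \<in> C \<Longrightarrow> b \<in> C \<Longrightarrow> add a b = z0 \<Longrightarrow> b = z0"
  using A3[of b] A5 A1 by force

abbreviation "pc \<equiv> pair_code M"

lemma pcC[simp]: "a \<in> C \<Longrightarrow> b \<in> C \<Longrightarrow> pc a b \<in> C"
  unfolding pair_code_def by simp

lemma pc_le1: "a \<in> C \<Longrightarrow> b \<in> C \<Longrightarrow> le a (pc a b)"
  unfolding pair_code_def using le_add2 by simp

lemma pc_le2: assumes "a \<in> C" "b \<in> C" shows "le b (pc a b)"
proof (cases "add a b = z0")
  case True
  then have "b = z0" using add_eq0[OF assms] by blast
  then show ?thesis using le0 assms by simp
next
  case False
  have "le b (add a b)" using le_add2 assms by auto
  moreover have "le (add a b) (mul (add a b) (add a b))" using le_mul False assms by auto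
  moreover have "le (mul (add a b) (add a b)) (pc a b)" unfolding pair_code_def using le_add assms by auto
  ultimately have "le b (mul (add a b) (add a b))"
    using le_trans[of b "add a b" "mul (add a b) (add a b)"] assms by (meson addC mulC)
  then show ?thesis using le_trans[of b "mul (add a b) (add a b)" "pc a b"] assms
    \<open>le (mul (add a b) (add a b)) (pc a b)\<close> by (meson addC mulC pcC)
qed

lemma sq_exp: assumes "s \<in> C" "z \<in> C"
  shows "mul (add s (add z o1)) (add s (add z o1)) =
         add (mul s s) (add s (add (add (add (mul s z) (mul (add z o1) s)) (add (mul (add z o1) z) z)) o1))"
  using assms apply (simp add: distl distr)
  apply (simp add: add_ac mul_ac)
  done

lemma pc_inj_aux: assumes "a \<in> C" "b \<in> C" "c \<in> C" "d \<in> C" "lt (add a b) (add c d)"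
  shows "pc a b \<noteq> pc c d"
proof
  assume eq: "pc a b = pc c d"
  let ?s = "add a b"
  obtain z where z: "z \<in> C" "add ?s (add z o1) = add c d" using L assms by auto
  define W where "W = add (add (mul ?s z) (mul (add z o1) ?s)) (add (mul (add z o1) z) z)"
  have W: "W \<in> C" unfolding W_def using z assms by simp
  have "pc c d = add (mul (add ?s (add z o1)) (add ?s (add z o1))) c"
    unfolding pair_code_def using z by simp
  also have "\<dots> = add (mul ?s ?s) (add ?s (add (add W o1) c))"
    using sq_exp[of ?s z] z assms W unfolding W_def by (simp add: add_ac)
  finally have "add (mul ?s ?s) a = add (mul ?s ?s) (add ?s (add (add W o1) c))"
    using eq unfolding pair_code_def by simp
  then have "a = add ?s (add (add W o1) c)" using add_cancel_l[of a "add ?s (add (add W o1) c)" "mul ?s ?s"] assms W by simp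
  then have "add a z0 = add a (add (add (add b W) c) o1)" using assms W by (simp add: add_ac)
  then have "z0 = add (add (add b W) c) o1" using add_cancel_l[of z0 "add (add (add b W) c) o1" a] assms W by simp
  then show False using A1[of "add (add b W) c"] assms W by simp
qed

lemma pc_inj: assumes "a \<in> C" "b \<in> C" "c \<in> C" "d \<in> C" "pc a b = pc c d"
  shows "a = c \<and> b = d"
proof -
  have "add a b = add c d"
    using trich[of "add a b" "add c d"] pc_inj_aux[of a b c d] pc_inj_aux[of c d a b] assms by auto
  then have "a = c" using assms unfolding pair_code_def by (simp add: add_cancel_l)
  then show ?thesis using \<open>add a b = add c d\<close> assms by (simp add: add_cancel_l)
qed

lemma pc_eq_iff: "a \<in> C \<Longrightarrow> b \<in> C \<Longrightarrow> c \<in> C \<Longrightarrow> d \<in> C \<Longrightarrow> pc a b = pc c d \<longleftrightarrow> a = c \<and> b = d"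
  using pc_inj by blast

lemma LNP: assumes "A \<in> Xs" "a \<in> A"
  shows "\<exists>m\<in>A. \<forall>y\<in>C. lt y m \<longrightarrow> y \<notin> A"
proof (rule ccontr)
  assume H: "\<not> ?thesis"
  have AC: "A \<subseteq> C" using assms XsC by auto
  have "\<forall>y\<in>C. lt y x \<longrightarrow> y \<notin> A" if "x \<in> C" for x
  proof (rule induct_fmS[where \<phi>="BAll 1 (Var 0) (Neg (Mem (Var 1) 0))"
        and e="\<lambda>_. z0" and x=0 and S="(\<lambda>_. C)(0:=A)" and P="\<lambda>x. \<forall>y\<in>C. lt y x \<longrightarrow> y \<notin> A"])
    fix x assume x: "x \<in> C" and IH: "\<forall>y\<in>C. lt y x \<longrightarrow> y \<notin> A"
    show "\<forall>y\<in>C. lt y (add x o1) \<longrightarrow> y \<notin> A"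
    proof (intro ballI impI)
      fix y assume y: "y \<in> C" "lt y (add x o1)"
      then have "lt y x \<or> y = x" using lt_succ x by auto
      then show "y \<notin> A" using IH H x y by auto
    qed
  qed (use that assms in \<open>auto intro!: delta0_sigma1\<close>)
  note I = this
  have aC: "a \<in> C" using AC assms by auto
  then have "lt a (add a o1)" using lt_succ[of a a] by simp
  then show False using I[of "add a o1"] aC assms by simp
qed

lemma least_unique: assumes "m \<in> C" "m' \<in> C" "m \<in> A" "m' \<in> A"
  "\<forall>y\<in>C. lt y m \<longrightarrow> y \<notin> A" "\<forall>y\<in>C. lt y m' \<longrightarrow> y \<notin> A" shows "m = m'"
  using trich[of m m'] assms by auto

end


fun fvt :: "trm \<Rightarrow> nat set" where
  "fvt (Var i) = {i}" | "fvt Zero = {}" | "fvt One = {}"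
| "fvt (Plus s t) = fvt s \<union> fvt t" | "fvt (Times s t) = fvt s \<union> fvt t"

fun fv :: "fm \<Rightarrow> nat set" where
  "fv (Eq s t) = fvt s \<union> fvt t"
| "fv (Lt s t) = fvt s \<union> fvt t"
| "fv (Mem t j) = fvt t"
| "fv (Neg \<phi>) = fv \<phi>"
| "fv (Conj \<phi> \<psi>) = fv \<phi> \<union> fv \<psi>"
| "fv (Disj \<phi> \<psi>) = fv \<phi> \<union> fv \<psi>"
| "fv (Impl \<phi> \<psi>) = fv \<phi> \<union> fv \<psi>"
| "fv (Ex x \<phi>) = fv \<phi> - {x}"
| "fv (All x \<phi>) = fv \<phi> - {x}"
| "fv (BEx x t \<phi>) = fvt t \<union> (fv \<phi> - {x})"
| "fv (BAll x t \<phi>) = fvt t \<union> (fv \<phi> - {x})"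
| "fv (SEx j \<phi>) = fv \<phi>"
| "fv (SAll j \<phi>) = fv \<phi>"

fun vars :: "fm \<Rightarrow> nat set" where
  "vars (Eq s t) = fvt s \<union> fvt t"
| "vars (Lt s t) = fvt s \<union> fvt t"
| "vars (Mem t j) = fvt t"
| "vars (Neg \<phi>) = vars \<phi>"
| "vars (Conj \<phi> \<psi>) = vars \<phi> \<union> vars \<psi>"
| "vars (Disj \<phi> \<psi>) = vars \<phi> \<union> vars \<psi>"
| "vars (Impl \<phi> \<psi>) = vars \<phi> \<union> vars \<psi>"
| "vars (Ex x \<phi>) = insert x (vars \<phi>)"
| "vars (All x \<phi>) = insert x (vars \<phi>)"
| "vars (BEx x t \<phi>) = insert x (fvt t \<union> vars \<phi>)"
| "vars (BAll x t \<phi>) = insert x (fvt t \<union> vars \<phi>)"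
| "vars (SEx j \<phi>) = vars \<phi>"
| "vars (SAll j \<phi>) = vars \<phi>"

fun pbv :: "fm \<Rightarrow> nat set" where
  "pbv (Ex x \<phi>) = insert x (pbv \<phi>)"
| "pbv (All x \<phi>) = insert x (pbv \<phi>)"
| "pbv _ = {}"

lemma finite_fvt[simp]: "finite (fvt t)" by (induction t) auto
lemma finite_vars[simp]: "finite (vars \<phi>)" by (induction \<phi>) auto
lemma fv_vars: "fv \<phi> \<subseteq> vars \<phi>" by (induction \<phi>) auto
lemma pbv_vars: "pbv \<phi> \<subseteq> vars \<phi>" by (induction \<phi>) auto
lemma pbv_fv: "pbv \<phi> \<inter> fv \<phi> = {}" by (induction \<phi>) auto

lemma ev_cong: "(\<forall>v\<in>fvt t. e v = e' v) \<Longrightarrow> ev M e t = ev M e' t"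
  by (induction t) auto

lemma sat_cong: "(\<forall>v\<in>fv \<phi>. e v = e' v) \<Longrightarrow> sat M Xs e S \<phi> = sat M Xs e' S \<phi>"
proof (induction \<phi> arbitrary: e e' S)
  case (Eq s t) then show ?case using ev_cong[of s e e' M] ev_cong[of t e e' M] by auto
next
  case (Lt s t) then show ?case using ev_cong[of s e e' M] ev_cong[of t e e' M] by auto
next
  case (Mem t j) then show ?case using ev_cong[of t e e' M] by auto
next
  case (Ex x \<phi>)
  have "\<And>a. sat M Xs (e(x:=a)) S \<phi> = sat M Xs (e'(x:=a)) S \<phi>"
    by (rule Ex.IH) (use Ex.prems in auto)
  then show ?case by simp
next
  case (All x \<phi>)
  have "\<And>a. sat M Xs (e(x:=a)) S \<phi> = sat M Xs (e'(x:=a)) S \<phi>"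
    by (rule All.IH) (use All.prems in auto)
  then show ?case by simp
next
  case (BEx x t \<phi>)
  have "\<And>a. sat M Xs (e(x:=a)) S \<phi> = sat M Xs (e'(x:=a)) S \<phi>"
    by (rule BEx.IH) (use BEx.prems in auto)
  moreover have "ev M e t = ev M e' t" using ev_cong[of t e e' M] BEx.prems by auto
  ultimately show ?case by simp
next
  case (BAll x t \<phi>)
  have "\<And>a. sat M Xs (e(x:=a)) S \<phi> = sat M Xs (e'(x:=a)) S \<phi>"
    by (rule BAll.IH) (use BAll.prems in auto)
  moreover have "ev M e t = ev M e' t" using ev_cong[of t e e' M] BAll.prems by auto
  ultimately show ?case by simp
next
  case (Neg \<phi>) then show ?case using Neg.IH[of e e' S] by auto
next
  case (Conj \<phi> \<psi>)
  have "sat M Xs e S \<phi> = sat M Xs e' S \<phi>" by (rule Conj.IH(1)) (use Conj.prems in auto)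
  moreover have "sat M Xs e S \<psi> = sat M Xs e' S \<psi>" by (rule Conj.IH(2)) (use Conj.prems in auto)
  ultimately show ?case by simp
next
  case (Disj \<phi> \<psi>)
  have "sat M Xs e S \<phi> = sat M Xs e' S \<phi>" by (rule Disj.IH(1)) (use Disj.prems in auto)
  moreover have "sat M Xs e S \<psi> = sat M Xs e' S \<psi>" by (rule Disj.IH(2)) (use Disj.prems in auto)
  ultimately show ?case by simp
next
  case (Impl \<phi> \<psi>)
  have "sat M Xs e S \<phi> = sat M Xs e' S \<phi>" by (rule Impl.IH(1)) (use Impl.prems in auto)
  moreover have "sat M Xs e S \<psi> = sat M Xs e' S \<psi>" by (rule Impl.IH(2)) (use Impl.prems in auto)
  ultimately show ?case by simp
next
  case (SEx j \<phi>)
  have "\<And>A. sat M Xs e (S(j:=A)) \<phi> = sat M Xs e' (S(j:=A)) \<phi>" by (rule SEx.IH) (use SEx.prems in auto)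
  then show ?case by simp
next
  case (SAll j \<phi>)
  have "\<And>A. sat M Xs e (S(j:=A)) \<phi> = sat M Xs e' (S(j:=A)) \<phi>" by (rule SAll.IH) (use SAll.prems in auto)
  then show ?case by simp
qed

lemma sat_S: "first_order \<phi> \<Longrightarrow> sat M Xs e S \<phi> = sat M Xs e S' \<phi>"
  by (induction \<phi> arbitrary: e) auto

fun push :: "fm \<Rightarrow> fm \<Rightarrow> fm" where
  "push d (Ex x \<phi>) = Ex x (push d \<phi>)"
| "push d (All x \<phi>) = All x (push d \<phi>)"
| "push d \<phi> = Conj d \<phi>"

lemma push_sat:
  assumes "carr M \<noteq> {}" "fv d \<inter> pbv \<phi> = {}"
  shows "sat M Xs e S (push d \<phi>) \<longleftrightarrow> sat M Xs e S d \<and> sat M Xs e S \<phi>"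
  using assms(2)
proof (induction d \<phi> arbitrary: e rule: push.induct)
  case (1 d x \<phi>)
  have "\<And>a. sat M Xs (e(x:=a)) S d = sat M Xs e S d"
    by (rule sat_cong) (use 1(2) in auto)
  then show ?case using 1 by auto
next
  case (2 d x \<phi>)
  have "\<And>a. sat M Xs (e(x:=a)) S d = sat M Xs e S d"
    by (rule sat_cong) (use 2(2) in auto)
  then show ?case using 2 assms(1) by auto
qed auto

lemma delta0_push: "delta0 \<phi> \<Longrightarrow> push d \<phi> = Conj d \<phi>"
  by (cases \<phi>) auto

lemma push_sigma_pi:
  "sigma k \<phi> \<Longrightarrow> delta0 d \<Longrightarrow> sigma k (push d \<phi>)"
  "pi k \<phi> \<Longrightarrow> delta0 d \<Longrightarrow> pi k (push d \<phi>)"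
proof (induction rule: sigma_pi.inducts)
  case (sigma0 \<phi>) then show ?case by (simp add: delta0_push sigma_pi.sigma0)
next
  case (pi0 \<phi>) then show ?case by (simp add: delta0_push sigma_pi.pi0)
next
  case (sigma_pi n \<phi>) then show ?case by (simp add: sigma_pi.sigma_pi)
next
  case (sigma_ex n \<phi> x) then show ?case by (simp add: sigma_pi.sigma_ex)
next
  case (pi_sigma n \<phi>) then show ?case by (simp add: sigma_pi.pi_sigma)
next
  case (pi_all n \<phi> x) then show ?case by (simp add: sigma_pi.pi_all)
qed

fun dual :: "fm \<Rightarrow> fm" where
  "dual (Ex x \<phi>) = All x (dual \<phi>)"
| "dual (All x \<phi>) = Ex x (dual \<phi>)"
| "dual \<phi> = Neg \<phi>"

lemma dual_sat: "sat M Xs e S (dual \<phi>) \<longleftrightarrow> \<not> sat M Xs e S \<phi>"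
  by (induction \<phi> arbitrary: e rule: dual.induct) auto

lemma dual_fo: "first_order (dual \<phi>) = first_order \<phi>"
  by (induction \<phi> rule: dual.induct) auto

lemma delta0_dual: "delta0 \<phi> \<Longrightarrow> dual \<phi> = Neg \<phi>"
  by (cases \<phi>) auto

lemma dual_sigma_pi:
  "sigma k \<phi> \<Longrightarrow> pi k (dual \<phi>)"
  "pi k \<phi> \<Longrightarrow> sigma k (dual \<phi>)"
proof (induction rule: sigma_pi.inducts)
  case (sigma0 \<phi>) then show ?case by (simp add: delta0_dual sigma_pi.pi0)
next
  case (pi0 \<phi>) then show ?case by (simp add: delta0_dual sigma_pi.sigma0)
next
  case (sigma_pi n \<phi>) then show ?case by (simp add: sigma_pi.pi_sigma)
next
  case (sigma_ex n \<phi> x) then show ?case by (simp add: sigma_pi.pi_all)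
next
  case (pi_sigma n \<phi>) then show ?case by (simp add: sigma_pi.sigma_pi)
next
  case (pi_all n \<phi> x) then show ?case by (simp add: sigma_pi.sigma_ex)
qed

lemma sigma_pi_mono:
  "sigma k \<phi> \<Longrightarrow> sigma (Suc k) \<phi>"
  "pi k \<phi> \<Longrightarrow> pi (Suc k) \<phi>"
proof (induction rule: sigma_pi.inducts)
  case (sigma0 \<phi>) then show ?case by (simp add: sigma_pi.sigma_pi sigma_pi.pi0)
next
  case (pi0 \<phi>) then show ?case by (simp add: sigma_pi.pi_sigma sigma_pi.sigma0)
next
  case (sigma_pi n \<phi>) then show ?case by (simp add: sigma_pi.sigma_pi)
next
  case (sigma_ex n \<phi> x) then show ?case by (simp add: sigma_pi.sigma_ex)
next
  case (pi_sigma n \<phi>) then show ?case by (simp add: sigma_pi.pi_sigma)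
next
  case (pi_all n \<phi> x) then show ?case by (simp add: sigma_pi.pi_all)
qed

lemma sigma_mono_le: "sigma k \<phi> \<Longrightarrow> k \<le> m \<Longrightarrow> sigma m \<phi>"
proof (induction m)
  case (Suc m) then show ?case using sigma_pi_mono(1) le_Suc_eq by blast
qed auto

lemma sigma0_delta0: "sigma 0 \<phi> \<Longrightarrow> delta0 \<phi>"
  by (cases rule: sigma.cases) auto

definition exblock :: "nat list \<Rightarrow> fm \<Rightarrow> fm" where "exblock xs \<phi> = foldr Ex xs \<phi>"
definition allblock :: "nat list \<Rightarrow> fm \<Rightarrow> fm" where "allblock xs \<phi> = foldr All xs \<phi>"
definition bexblock :: "nat list \<Rightarrow> trm \<Rightarrow> fm \<Rightarrow> fm" where "bexblock xs t \<phi> = foldr (\<lambda>x. BEx x t) xs \<phi>"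

lemma exblock_sat: "sat M Xs e S (exblock xs \<phi>) \<longleftrightarrow>
   (\<exists>e'. (\<forall>v\<in>set xs. e' v \<in> carr M) \<and> (\<forall>v. v \<notin> set xs \<longrightarrow> e' v = e v) \<and> sat M Xs e' S \<phi>)"
proof (induction xs arbitrary: e)
  case Nil
  have "(\<forall>v. e' v = e v) \<longleftrightarrow> e' = e" for e' :: "nat \<Rightarrow> 'a" by auto
  then show ?case by (simp add: exblock_def)
next
  case (Cons x xs)
  have "sat M Xs e S (exblock (x#xs) \<phi>) = (\<exists>a\<in>carr M. sat M Xs (e(x:=a)) S (exblock xs \<phi>))"
    by (simp add: exblock_def)
  also have "\<dots> = (\<exists>a\<in>carr M. \<exists>e'. (\<forall>v\<in>set xs. e' v \<in> carr M) \<and> (\<forall>v. v \<notin> set xs \<longrightarrow> e' v = (e(x:=a)) v) \<and> sat M Xs e' S \<phi>)"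
    using Cons by simp
  also have "\<dots> = (\<exists>e'. (\<forall>v\<in>set (x#xs). e' v \<in> carr M) \<and> (\<forall>v. v \<notin> set (x#xs) \<longrightarrow> e' v = e v) \<and> sat M Xs e' S \<phi>)"
  proof
    assume "\<exists>a\<in>carr M. \<exists>e'. (\<forall>v\<in>set xs. e' v \<in> carr M) \<and> (\<forall>v. v \<notin> set xs \<longrightarrow> e' v = (e(x:=a)) v) \<and> sat M Xs e' S \<phi>"
    then obtain a e' where "a \<in> carr M" "\<forall>v\<in>set xs. e' v \<in> carr M" "\<forall>v. v \<notin> set xs \<longrightarrow> e' v = (e(x:=a)) v" "sat M Xs e' S \<phi>"
      by blast
    then show "\<exists>e'. (\<forall>v\<in>set (x#xs). e' v \<in> carr M) \<and> (\<forall>v. v \<notin> set (x#xs) \<longrightarrow> e' v = e v) \<and> sat M Xs e' S \<phi>"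
      by (intro exI[of _ e']) (auto split: if_splits)
  next
    assume "\<exists>e'. (\<forall>v\<in>set (x#xs). e' v \<in> carr M) \<and> (\<forall>v. v \<notin> set (x#xs) \<longrightarrow> e' v = e v) \<and> sat M Xs e' S \<phi>"
    then obtain e' where "\<forall>v\<in>set (x#xs). e' v \<in> carr M" "\<forall>v. v \<notin> set (x#xs) \<longrightarrow> e' v = e v" "sat M Xs e' S \<phi>"
      by blast
    then show "\<exists>a\<in>carr M. \<exists>e'. (\<forall>v\<in>set xs. e' v \<in> carr M) \<and> (\<forall>v. v \<notin> set xs \<longrightarrow> e' v = (e(x:=a)) v) \<and> sat M Xs e' S \<phi>"
      by (intro bexI[of _ "e' x"] exI[of _ e']) auto
  qed
  finally show ?case .
qed

lemma allblock_sat: "sat M Xs e S (allblock xs \<phi>) \<longleftrightarrow>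
   (\<forall>e'. (\<forall>v\<in>set xs. e' v \<in> carr M) \<longrightarrow> (\<forall>v. v \<notin> set xs \<longrightarrow> e' v = e v) \<longrightarrow> sat M Xs e' S \<phi>)"
proof (induction xs arbitrary: e)
  case Nil
  have "(\<forall>v. e' v = e v) \<longleftrightarrow> e' = e" for e' :: "nat \<Rightarrow> 'a" by auto
  then show ?case by (simp add: allblock_def)
next
  case (Cons x xs)
  have "sat M Xs e S (allblock (x#xs) \<phi>) = (\<forall>a\<in>carr M. sat M Xs (e(x:=a)) S (allblock xs \<phi>))"
    by (simp add: allblock_def)
  also have "\<dots> = (\<forall>a\<in>carr M. \<forall>e'. (\<forall>v\<in>set xs. e' v \<in> carr M) \<longrightarrow> (\<forall>v. v \<notin> set xs \<longrightarrow> e' v = (e(x:=a)) v) \<longrightarrow> sat M Xs e' S \<phi>)"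
    using Cons by simp
  also have "\<dots> = (\<forall>e'. (\<forall>v\<in>set (x#xs). e' v \<in> carr M) \<longrightarrow> (\<forall>v. v \<notin> set (x#xs) \<longrightarrow> e' v = e v) \<longrightarrow> sat M Xs e' S \<phi>)"
  proof
    assume H: "\<forall>a\<in>carr M. \<forall>e'. (\<forall>v\<in>set xs. e' v \<in> carr M) \<longrightarrow> (\<forall>v. v \<notin> set xs \<longrightarrow> e' v = (e(x:=a)) v) \<longrightarrow> sat M Xs e' S \<phi>"
    show "\<forall>e'. (\<forall>v\<in>set (x#xs). e' v \<in> carr M) \<longrightarrow> (\<forall>v. v \<notin> set (x#xs) \<longrightarrow> e' v = e v) \<longrightarrow> sat M Xs e' S \<phi>"
    proof (intro allI impI)
      fix e' assume "\<forall>v\<in>set (x#xs). e' v \<in> carr M" "\<forall>v. v \<notin> set (x#xs) \<longrightarrow> e' v = e v"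
      then show "sat M Xs e' S \<phi>" using H[rule_format, of "e' x" e'] by auto
    qed
  next
    assume H: "\<forall>e'. (\<forall>v\<in>set (x#xs). e' v \<in> carr M) \<longrightarrow> (\<forall>v. v \<notin> set (x#xs) \<longrightarrow> e' v = e v) \<longrightarrow> sat M Xs e' S \<phi>"
    show "\<forall>a\<in>carr M. \<forall>e'. (\<forall>v\<in>set xs. e' v \<in> carr M) \<longrightarrow> (\<forall>v. v \<notin> set xs \<longrightarrow> e' v = (e(x:=a)) v) \<longrightarrow> sat M Xs e' S \<phi>"
    proof (intro ballI allI impI)
      fix a e' assume "a \<in> carr M" "\<forall>v\<in>set xs. e' v \<in> carr M" "\<forall>v. v \<notin> set xs \<longrightarrow> e' v = (e(x:=a)) v"
      then show "sat M Xs e' S \<phi>" using H[rule_format, of e'] by (auto split: if_splits)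
    qed
  qed
  finally show ?case .
qed

lemma bexblock_sat: assumes "set xs \<inter> fvt t = {}"
  shows "sat M Xs e S (bexblock xs t \<phi>) \<longleftrightarrow>
   (\<exists>e'. (\<forall>v\<in>set xs. e' v \<in> carr M \<and> ls M (e' v) (ev M e t)) \<and> (\<forall>v. v \<notin> set xs \<longrightarrow> e' v = e v) \<and> sat M Xs e' S \<phi>)"
  using assms
proof (induction xs arbitrary: e)
  case Nil
  have "(\<forall>v. e' v = e v) \<longleftrightarrow> e' = e" for e' :: "nat \<Rightarrow> 'a" by auto
  then show ?case by (simp add: bexblock_def)
next
  case (Cons x xs)
  have evx: "ev M (e(x:=a)) t = ev M e t" for a by (rule ev_cong) (use Cons.prems in auto)
  have "sat M Xs e S (bexblock (x#xs) t \<phi>) = (\<exists>a\<in>carr M. ls M a (ev M e t) \<and> sat M Xs (e(x:=a)) S (bexblock xs t \<phi>))"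
    by (simp add: bexblock_def)
  also have "\<dots> = (\<exists>a\<in>carr M. ls M a (ev M e t) \<and> (\<exists>e'. (\<forall>v\<in>set xs. e' v \<in> carr M \<and> ls M (e' v) (ev M e t)) \<and> (\<forall>v. v \<notin> set xs \<longrightarrow> e' v = (e(x:=a)) v) \<and> sat M Xs e' S \<phi>))"
    using Cons evx by simp
  also have "\<dots> = (\<exists>e'. (\<forall>v\<in>set (x#xs). e' v \<in> carr M \<and> ls M (e' v) (ev M e t)) \<and> (\<forall>v. v \<notin> set (x#xs) \<longrightarrow> e' v = e v) \<and> sat M Xs e' S \<phi>)"
  proof
    assume "\<exists>a\<in>carr M. ls M a (ev M e t) \<and> (\<exists>e'. (\<forall>v\<in>set xs. e' v \<in> carr M \<and> ls M (e' v) (ev M e t)) \<and> (\<forall>v. v \<notin> set xs \<longrightarrow> e' v = (e(x:=a)) v) \<and> sat M Xs e' S \<phi>)"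
    then obtain a e' where "a \<in> carr M" "ls M a (ev M e t)" "\<forall>v\<in>set xs. e' v \<in> carr M \<and> ls M (e' v) (ev M e t)" "\<forall>v. v \<notin> set xs \<longrightarrow> e' v = (e(x:=a)) v" "sat M Xs e' S \<phi>"
      by blast
    then show "\<exists>e'. (\<forall>v\<in>set (x#xs). e' v \<in> carr M \<and> ls M (e' v) (ev M e t)) \<and> (\<forall>v. v \<notin> set (x#xs) \<longrightarrow> e' v = e v) \<and> sat M Xs e' S \<phi>"
      by (intro exI[of _ e']) (auto split: if_splits)
  next
    assume "\<exists>e'. (\<forall>v\<in>set (x#xs). e' v \<in> carr M \<and> ls M (e' v) (ev M e t)) \<and> (\<forall>v. v \<notin> set (x#xs) \<longrightarrow> e' v = e v) \<and> sat M Xs e' S \<phi>"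
    then obtain e' where "\<forall>v\<in>set (x#xs). e' v \<in> carr M \<and> ls M (e' v) (ev M e t)" "\<forall>v. v \<notin> set (x#xs) \<longrightarrow> e' v = e v" "sat M Xs e' S \<phi>"
      by blast
    then show "\<exists>a\<in>carr M. ls M a (ev M e t) \<and> (\<exists>e'. (\<forall>v\<in>set xs. e' v \<in> carr M \<and> ls M (e' v) (ev M e t)) \<and> (\<forall>v. v \<notin> set xs \<longrightarrow> e' v = (e(x:=a)) v) \<and> sat M Xs e' S \<phi>)"
      by (intro bexI[of _ "e' x"] conjI exI[of _ e']) auto
  qed
  finally show ?case .
qed

lemma exblock_sigma: "sigma (Suc k) \<phi> \<Longrightarrow> sigma (Suc k) (exblock xs \<phi>)"
  by (induction xs) (auto simp: exblock_def intro: sigma_ex)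
lemma allblock_pi: "pi (Suc k) \<phi> \<Longrightarrow> pi (Suc k) (allblock xs \<phi>)"
  by (induction xs) (auto simp: allblock_def intro: pi_all)
lemma bexblock_delta0: "delta0 \<phi> \<Longrightarrow> delta0 (bexblock xs t \<phi>)"
  by (induction xs) (auto simp: bexblock_def)
lemma exblock_fo: "first_order (exblock xs \<phi>) = first_order \<phi>"
  by (induction xs) (auto simp: exblock_def)

definition pairT :: "trm \<Rightarrow> trm \<Rightarrow> trm" where
  "pairT s t = Plus (Times (Plus s t) (Plus s t)) s"

lemma ev_pairT[simp]: "ev M e (pairT s t) = pair_code M (ev M e s) (ev M e t)"
  by (simp add: pairT_def pair_code_def)
lemma fvt_pairT[simp]: "fvt (pairT s t) = fvt s \<union> fvt t"
  by (auto simp: pairT_def)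

fun codeT :: "nat list \<Rightarrow> trm" where
  "codeT [] = Zero"
| "codeT (x#xs) = pairT (Var x) (codeT xs)"

lemma fvt_codeT[simp]: "fvt (codeT xs) = set xs"
  by (induction xs) auto

lemma sigma_SS_struct:
  "sigma m \<phi> \<Longrightarrow> (\<forall>k. m = Suc (Suc k) \<longrightarrow> (\<exists>xs \<psi>. \<phi> = exblock xs \<psi> \<and> pi (Suc k) \<psi>))"
  "pi m \<phi> \<Longrightarrow> True"
proof (induction rule: sigma_pi.inducts)
  case (sigma_pi n \<phi>) then show ?case by (auto intro!: exI[of _ "[]"] simp: exblock_def)
next
  case (sigma_ex n \<phi> x)
  show ?case
  proof (intro allI impI)
    fix k assume "Suc n = Suc (Suc k)"
    then obtain xs \<psi> where "\<phi> = exblock xs \<psi>" "pi (Suc k) \<psi>" using sigma_ex by auto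
    then show "\<exists>xs \<psi>. Ex x \<phi> = exblock xs \<psi> \<and> pi (Suc k) \<psi>"
      by (intro exI[of _ "x#xs"] exI[of _ \<psi>]) (auto simp: exblock_def)
  qed
qed auto

lemma pi_S_struct:
  "sigma m \<phi> \<Longrightarrow> True"
  "pi m \<phi> \<Longrightarrow> (\<forall>k. m = Suc k \<longrightarrow> (\<exists>xs \<psi>. \<phi> = allblock xs \<psi> \<and> sigma k \<psi>))"
proof (induction rule: sigma_pi.inducts)
  case (pi_sigma n \<phi>) then show ?case by (auto intro!: exI[of _ "[]"] simp: allblock_def)
next
  case (pi_all n \<phi> x)
  show ?case
  proof (intro allI impI)
    fix k assume "Suc n = Suc k"
    then obtain xs \<psi> where "\<phi> = allblock xs \<psi>" "sigma k \<psi>" using pi_all by auto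
    then show "\<exists>xs \<psi>. All x \<phi> = allblock xs \<psi> \<and> sigma k \<psi>"
      by (intro exI[of _ "x#xs"] exI[of _ \<psi>]) (auto simp: allblock_def)
  qed
qed auto



context base begin

lemma C_ne[simp]: "C \<noteq> {}" using z0C by blast
lemma exC[simp]: "\<exists>z. z \<in> C" using z0C by blast

lemma comp1:
  assumes "sigma (Suc 0) \<phi>a" "pi (Suc 0) \<phi>b" "\<forall>v. e v \<in> C" "\<forall>j. S j \<in> Xs"
    "\<And>a. a\<in>C \<Longrightarrow> sat M Xs (e(x:=a)) S \<phi>a \<longleftrightarrow> P a"
    "\<And>a. a\<in>C \<Longrightarrow> sat M Xs (e(x:=a)) S \<phi>b \<longleftrightarrow> P a"
  shows "{a\<in>C. P a} \<in> Xs"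
proof -
  have "delta1_comp M Xs" using rca unfolding rca0_def by auto
  note D = this[unfolded delta1_comp_def]
  have "{a\<in>C. sat M Xs (e(x:=a)) S \<phi>a} \<in> Xs"
    by (rule D[rule_format, where \<phi>=\<phi>a and \<psi>=\<phi>b and x=x and e=e and S=S]) (use assms in \<open>auto simp: env_ok_def\<close>)
  moreover have "{a\<in>C. sat M Xs (e(x:=a)) S \<phi>a} = {a\<in>C. P a}" using assms by auto
  ultimately show ?thesis by simp
qed

lemma comp0:
  assumes "delta0 \<phi>" "\<forall>v. e v \<in> C" "\<forall>j. S j \<in> Xs"
    "\<And>a. a\<in>C \<Longrightarrow> sat M Xs (e(x:=a)) S \<phi> \<longleftrightarrow> P a"
  shows "{a\<in>C. P a} \<in> Xs"
  by (rule comp1[where \<phi>a=\<phi> and \<phi>b=\<phi>]) (use assms in \<open>auto intro: delta0_sigma1 delta0_pi1\<close>)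

lemma Xs_inter: assumes "A \<in> Xs" "B \<in> Xs" shows "A \<inter> B \<in> Xs"
proof -
  have "{a\<in>C. a \<in> A \<and> a \<in> B} \<in> Xs"
    by (rule comp0[where \<phi>="Conj (Mem (Var 0) 0) (Mem (Var 0) 1)" and e="\<lambda>_. z0" and x=0
          and S="(\<lambda>_. C)(0:=A,1:=B)"]) (use assms in auto)
  moreover have "{a\<in>C. a \<in> A \<and> a \<in> B} = A \<inter> B" using assms XsC by auto
  ultimately show ?thesis by simp
qed

lemma Xs_compl: assumes "A \<in> Xs" shows "C - A \<in> Xs"
proof -
  have "{a\<in>C. a \<notin> A} \<in> Xs"
    by (rule comp0[where \<phi>="Neg (Mem (Var 0) 0)" and e="\<lambda>_. z0" and x=0
          and S="(\<lambda>_. C)(0:=A)"]) (use assms in auto)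
  moreover have "{a\<in>C. a \<notin> A} = C - A" by auto
  ultimately show ?thesis by simp
qed

lemma Xs_sub: "A \<in> Xs \<Longrightarrow> A \<subseteq> C" using XsC by auto

lemma mem_fun_code[simp]:
  assumes "\<forall>i\<in>C. f i \<in> C" "i \<in> C" "y \<in> C"
  shows "pc i y \<in> fun_code M f \<longleftrightarrow> y = f i"
proof
  assume "pc i y \<in> fun_code M f"
  then obtain i' where "i' \<in> C" "pc i y = pc i' (f i')" unfolding fun_code_def by auto
  then show "y = f i" using pc_inj[of i y i' "f i'"] assms by auto
next
  assume "y = f i" then show "pc i y \<in> fun_code M f" unfolding fun_code_def using assms by blast
qed

lemma fun_code_C: "\<forall>i\<in>C. f i \<in> C \<Longrightarrow> fun_code M f \<subseteq> C"
  unfolding fun_code_def by auto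

lemma le_pc1: "a \<in> C \<Longrightarrow> b \<in> C \<Longrightarrow> lt a (add (pc a b) o1)"
  using pc_le1 le_lt by auto
lemma le_pc2: "a \<in> C \<Longrightarrow> b \<in> C \<Longrightarrow> lt b (add (pc a b) o1)"
  using pc_le2 le_lt by auto

lemma FsD: "g \<in> Fs M Xs \<Longrightarrow> g \<in> C \<rightarrow>\<^sub>E C \<and> fun_code M g \<in> Xs"
  unfolding Fs_def by auto
lemma FsC: "g \<in> Fs M Xs \<Longrightarrow> i \<in> C \<Longrightarrow> g i \<in> C"
  unfolding Fs_def by auto
lemma FsC': "g \<in> Fs M Xs \<Longrightarrow> \<forall>i\<in>C. g i \<in> C"
  unfolding Fs_def by auto
lemma Fs_ext: "g \<in> Fs M Xs \<Longrightarrow> i \<notin> C \<Longrightarrow> g i = undefined"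
  unfolding Fs_def by (auto simp: PiE_def extensional_def)
lemma Fs_restrict: "g \<in> Fs M Xs \<Longrightarrow> (\<lambda>i\<in>C. g i) = g"
  by (intro ext) (auto simp: restrict_def Fs_ext)

lemma graph1:
  assumes g: "g \<in> C \<rightarrow>\<^sub>E C" and d: "delta0 \<theta>a" "delta0 \<theta>b"
    and e: "\<forall>v. e v \<in> C" and S: "\<forall>j. S j \<in> Xs"
    and h1: "\<And>i y. i\<in>C \<Longrightarrow> y\<in>C \<Longrightarrow> (\<exists>z\<in>C. sat M Xs (e(0:=i,1:=y,2:=z)) S \<theta>a) \<longleftrightarrow> g i = y"
    and h2: "\<And>i y. i\<in>C \<Longrightarrow> y\<in>C \<Longrightarrow> (\<forall>z\<in>C. sat M Xs (e(0:=i,1:=y,2:=z)) S \<theta>b) \<longleftrightarrow> g i = y"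
  shows "g \<in> Fs M Xs"
proof -
  obtain X where X: "X \<notin> vars \<theta>a \<union> vars \<theta>b \<union> {0,1,2}"
    using ex_new_if_finite[of "vars \<theta>a \<union> vars \<theta>b \<union> {0,1,2}"] by auto
  have gC: "\<forall>i\<in>C. g i \<in> C" using g by auto
  have X1: "X \<notin> fv \<theta>a" and X2: "X \<notin> fv \<theta>b" using X fv_vars by auto
  define bnd where "bnd = Plus (Var X) One"
  define \<Phi>a where "\<Phi>a = Ex 2 (BEx 0 bnd (BEx 1 bnd (Conj (Eq (Var X) (pairT (Var 0) (Var 1))) \<theta>a)))"
  define \<Phi>b where "\<Phi>b = All 2 (BEx 0 bnd (BEx 1 bnd (Conj (Eq (Var X) (pairT (Var 0) (Var 1))) \<theta>b)))"
  have cong1: "sat M Xs (e(X:=a,2:=z,0:=i,1:=y)) S \<theta>a = sat M Xs (e(0:=i,1:=y,2:=z)) S \<theta>a" for a z i y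
    by (rule sat_cong) (use X1 in auto)
  have cong2: "sat M Xs (e(X:=a,2:=z,0:=i,1:=y)) S \<theta>b = sat M Xs (e(0:=i,1:=y,2:=z)) S \<theta>b" for a z i y
    by (rule sat_cong) (use X2 in auto)
  have XC: "X \<noteq> 0" "X \<noteq> 1" "X \<noteq> 2" using X by auto
  have s1: "sat M Xs (e(X:=a)) S \<Phi>a \<longleftrightarrow> (\<exists>z\<in>C. \<exists>i\<in>C. lt i (add a o1) \<and> (\<exists>y\<in>C. lt y (add a o1) \<and>
      a = pc i y \<and> sat M Xs (e(0:=i,1:=y,2:=z)) S \<theta>a))" for a
    unfolding \<Phi>a_def bnd_def using XC by (simp add: cong1[simplified])
  have s2: "sat M Xs (e(X:=a)) S \<Phi>b \<longleftrightarrow> (\<forall>z\<in>C. \<exists>i\<in>C. lt i (add a o1) \<and> (\<exists>y\<in>C. lt y (add a o1) \<and>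
      a = pc i y \<and> sat M Xs (e(0:=i,1:=y,2:=z)) S \<theta>b))" for a
    unfolding \<Phi>b_def bnd_def using XC by (simp add: cong2[simplified])
  have m1: "sat M Xs (e(X:=a)) S \<Phi>a \<longleftrightarrow> a \<in> fun_code M g" if a: "a \<in> C" for a
  proof
    assume "sat M Xs (e(X:=a)) S \<Phi>a"
    then obtain z i y where "z\<in>C" "i\<in>C" "y\<in>C" "a = pc i y" "sat M Xs (e(0:=i,1:=y,2:=z)) S \<theta>a"
      using s1 by auto
    then show "a \<in> fun_code M g" using h1 gC by auto
  next
    assume "a \<in> fun_code M g"
    then obtain i where i: "i \<in> C" "a = pc i (g i)" unfolding fun_code_def by auto
    then obtain z where "z \<in> C" "sat M Xs (e(0:=i,1:=g i,2:=z)) S \<theta>a" using h1[of i "g i"] gC by auto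
    moreover have "lt i (add a o1)" "lt (g i) (add a o1)" using le_pc1 le_pc2 i gC by auto
    ultimately show "sat M Xs (e(X:=a)) S \<Phi>a" unfolding s1 using i gC
      by (intro bexI[of _ z] bexI[of _ i] conjI bexI[of _ "g i"]) auto
  qed
  have m2: "sat M Xs (e(X:=a)) S \<Phi>b \<longleftrightarrow> a \<in> fun_code M g" if a: "a \<in> C" for a
  proof
    assume H: "sat M Xs (e(X:=a)) S \<Phi>b"
    then obtain i y where iy: "i\<in>C" "y\<in>C" "a = pc i y"
      using s2 z0C by blast
    have "\<forall>z\<in>C. sat M Xs (e(0:=i,1:=y,2:=z)) S \<theta>b"
    proof
      fix z assume "z \<in> C"
      then obtain i' y' where "i'\<in>C" "y'\<in>C" "a = pc i' y'" "sat M Xs (e(0:=i',1:=y',2:=z)) S \<theta>b"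
        using H s2 by blast
      then show "sat M Xs (e(0:=i,1:=y,2:=z)) S \<theta>b" using pc_inj[of i y i' y'] iy by auto
    qed
    then show "a \<in> fun_code M g" using h2 iy gC by auto
  next
    assume "a \<in> fun_code M g"
    then obtain i where i: "i \<in> C" "a = pc i (g i)" unfolding fun_code_def by auto
    then have "\<forall>z\<in>C. sat M Xs (e(0:=i,1:=g i,2:=z)) S \<theta>b" using h2[of i "g i"] gC by auto
    moreover have "lt i (add a o1)" "lt (g i) (add a o1)" using le_pc1 le_pc2 i gC by auto
    ultimately show "sat M Xs (e(X:=a)) S \<Phi>b" unfolding s2 using i gC
      by (intro ballI bexI[of _ i] conjI bexI[of _ "g i"]) auto
  qed
  have "{a\<in>C. a \<in> fun_code M g} \<in> Xs"
  proof (rule comp1[where \<phi>a=\<Phi>a and \<phi>b=\<Phi>b and e=e and S=S and x=X])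
    show "sigma (Suc 0) \<Phi>a" unfolding \<Phi>a_def using d
      by (intro sigma_ex delta0_sigma1) simp
    show "pi (Suc 0) \<Phi>b" unfolding \<Phi>b_def using d
      by (intro pi_all delta0_pi1) simp
  qed (use e S m1 m2 in auto)
  moreover have "{a\<in>C. a \<in> fun_code M g} = fun_code M g" using fun_code_C[OF gC] by auto
  ultimately show ?thesis using g unfolding Fs_def by auto
qed

end


context base begin

definition cst :: "'a \<Rightarrow> 'a \<Rightarrow> 'a" where "cst a = (\<lambda>i\<in>C. a)"
definition fadd :: "('a \<Rightarrow> 'a) \<Rightarrow> ('a \<Rightarrow> 'a) \<Rightarrow> 'a \<Rightarrow> 'a" where "fadd f g = (\<lambda>i\<in>C. add (f i) (g i))"
definition fmul :: "('a \<Rightarrow> 'a) \<Rightarrow> ('a \<Rightarrow> 'a) \<Rightarrow> 'a \<Rightarrow> 'a" where "fmul f g = (\<lambda>i\<in>C. mul (f i) (g i))"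
definition fcomp :: "('a \<Rightarrow> 'a) \<Rightarrow> ('a \<Rightarrow> 'a) \<Rightarrow> 'a \<Rightarrow> 'a" where "fcomp f g = (\<lambda>i\<in>C. f (g i))"

lemma cst_Fs: assumes "a \<in> C" shows "cst a \<in> Fs M Xs"
proof (rule graph1[where \<theta>a="Eq (Var 1) (Var 3)" and \<theta>b="Eq (Var 1) (Var 3)" and e="(\<lambda>_. z0)(3:=a)" and S="\<lambda>_. C"])
  show "cst a \<in> C \<rightarrow>\<^sub>E C" using assms by (auto simp: cst_def)
qed (use assms in \<open>auto simp: cst_def\<close>)

lemma fadd_Fs: assumes f: "f \<in> Fs M Xs" and g: "g \<in> Fs M Xs" shows "fadd f g \<in> Fs M Xs"
proof -
  have fC: "\<forall>i\<in>C. f i \<in> C" and gC: "\<forall>i\<in>C. g i \<in> C" using f g FsC' by auto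
  have fX: "fun_code M f \<in> Xs" and gX: "fun_code M g \<in> Xs" using f g FsD by auto
  define body where "body = BEx 4 (Plus (Var 1) One) (Conj (Mem (pairT (Var 0) (Var 4)) 0) (Eq (Var 1) (Plus (Var 4) (Var 2))))"
  have bs: "sat M Xs ((\<lambda>_. z0)(0:=i,1:=y,2:=z)) ((\<lambda>_. C)(0:=fun_code M f, 1:=fun_code M g)) body \<longleftrightarrow>
     y = add (f i) z" if "i \<in> C" "y \<in> C" "z \<in> C" for i y z
  proof -
    have "lt (f i) (add (add (f i) z) o1)" using le_add[of "f i" z] le_lt fC that by auto
    then show ?thesis unfolding body_def using that fC by auto
  qed
  show ?thesis
  proof (rule graph1[where \<theta>a="Conj (Mem (pairT (Var 0) (Var 2)) 1) body" and \<theta>b="Impl (Mem (pairT (Var 0) (Var 2)) 1) body"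
        and e="\<lambda>_. z0" and S="(\<lambda>_. C)(0:=fun_code M f, 1:=fun_code M g)"])
    show "fadd f g \<in> C \<rightarrow>\<^sub>E C" using fC gC by (auto simp: fadd_def)
  next
    fix i y assume iy: "i \<in> C" "y \<in> C"
    then show "(\<exists>z\<in>C. sat M Xs ((\<lambda>_. z0)(0:=i,1:=y,2:=z)) ((\<lambda>_. C)(0:=fun_code M f, 1:=fun_code M g)) (Conj (Mem (pairT (Var 0) (Var 2)) 1) body)) \<longleftrightarrow> fadd f g i = y"
      using bs gC by (auto simp: fadd_def)
    show "(\<forall>z\<in>C. sat M Xs ((\<lambda>_. z0)(0:=i,1:=y,2:=z)) ((\<lambda>_. C)(0:=fun_code M f, 1:=fun_code M g)) (Impl (Mem (pairT (Var 0) (Var 2)) 1) body)) \<longleftrightarrow> fadd f g i = y"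
      using bs gC iy by (auto simp: fadd_def)
  qed (auto simp: body_def fX gX)
qed

lemma fmul_Fs: assumes f: "f \<in> Fs M Xs" and g: "g \<in> Fs M Xs" shows "fmul f g \<in> Fs M Xs"
proof -
  have fC: "\<forall>i\<in>C. f i \<in> C" and gC: "\<forall>i\<in>C. g i \<in> C" using f g FsC' by auto
  have fX: "fun_code M f \<in> Xs" and gX: "fun_code M g \<in> Xs" using f g FsD by auto
  define body where "body = Disj (Conj (Eq (Var 2) Zero) (Eq (Var 1) Zero)) (BEx 4 (Plus (Var 1) One) (Conj (Mem (pairT (Var 0) (Var 4)) 0) (Eq (Var 1) (Times (Var 4) (Var 2)))))"
  have bs: "sat M Xs ((\<lambda>_. z0)(0:=i,1:=y,2:=z)) ((\<lambda>_. C)(0:=fun_code M f, 1:=fun_code M g)) body \<longleftrightarrow>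
     y = mul (f i) z" if "i \<in> C" "y \<in> C" "z \<in> C" for i y z
  proof (cases "z = z0")
    case True then show ?thesis unfolding body_def using that fC by auto
  next
    case False
    then have "lt (f i) (add (mul (f i) z) o1)" using le_mul[of "f i" z] le_lt fC that by auto
    then show ?thesis unfolding body_def using that fC False by auto
  qed
  show ?thesis
  proof (rule graph1[where \<theta>a="Conj (Mem (pairT (Var 0) (Var 2)) 1) body" and \<theta>b="Impl (Mem (pairT (Var 0) (Var 2)) 1) body"
        and e="\<lambda>_. z0" and S="(\<lambda>_. C)(0:=fun_code M f, 1:=fun_code M g)"])
    show "fmul f g \<in> C \<rightarrow>\<^sub>E C" using fC gC by (auto simp: fmul_def)
  next
    fix i y assume iy: "i \<in> C" "y \<in> C"
    then show "(\<exists>z\<in>C. sat M Xs ((\<lambda>_. z0)(0:=i,1:=y,2:=z)) ((\<lambda>_. C)(0:=fun_code M f, 1:=fun_code M g)) (Conj (Mem (pairT (Var 0) (Var 2)) 1) body)) \<longleftrightarrow> fmul f g i = y"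
      using bs gC by (auto simp: fmul_def)
    show "(\<forall>z\<in>C. sat M Xs ((\<lambda>_. z0)(0:=i,1:=y,2:=z)) ((\<lambda>_. C)(0:=fun_code M f, 1:=fun_code M g)) (Impl (Mem (pairT (Var 0) (Var 2)) 1) body)) \<longleftrightarrow> fmul f g i = y"
      using bs gC iy by (auto simp: fmul_def)
  qed (auto simp: body_def fX gX)
qed

lemma fcomp_Fs: assumes f: "f \<in> Fs M Xs" and g: "g \<in> Fs M Xs" shows "fcomp f g \<in> Fs M Xs"
proof -
  have fC: "\<forall>i\<in>C. f i \<in> C" and gC: "\<forall>i\<in>C. g i \<in> C" using f g FsC' by auto
  have fX: "fun_code M f \<in> Xs" and gX: "fun_code M g \<in> Xs" using f g FsD by auto
  show ?thesis
  proof (rule graph1[where \<theta>a="Conj (Mem (pairT (Var 0) (Var 2)) 1) (Mem (pairT (Var 2) (Var 1)) 0)"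
        and \<theta>b="Impl (Mem (pairT (Var 0) (Var 2)) 1) (Mem (pairT (Var 2) (Var 1)) 0)"
        and e="\<lambda>_. z0" and S="(\<lambda>_. C)(0:=fun_code M f, 1:=fun_code M g)"])
    show "fcomp f g \<in> C \<rightarrow>\<^sub>E C" using fC gC by (auto simp: fcomp_def)
  qed (use fC gC fX gX in \<open>auto simp: fcomp_def\<close>)
qed

definition unp :: "'a \<Rightarrow> 'a \<times> 'a" where
  "unp p = (if \<exists>a\<in>C. \<exists>b\<in>C. p = pc a b then (SOME ab. fst ab \<in> C \<and> snd ab \<in> C \<and> p = pc (fst ab) (snd ab)) else (z0, z0))"
definition p1 :: "'a \<Rightarrow> 'a" where "p1 p = fst (unp p)"
definition p2 :: "'a \<Rightarrow> 'a" where "p2 p = snd (unp p)"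

lemma unp_pc[simp]: assumes "a \<in> C" "b \<in> C" shows "unp (pc a b) = (a, b)"
proof -
  have ex: "\<exists>ab. fst ab \<in> C \<and> snd ab \<in> C \<and> pc a b = pc (fst ab) (snd ab)"
    using assms by (intro exI[of _ "(a,b)"]) auto
  define S where "S = (SOME ab. fst ab \<in> C \<and> snd ab \<in> C \<and> pc a b = pc (fst ab) (snd ab))"
  have "fst S \<in> C \<and> snd S \<in> C \<and> pc a b = pc (fst S) (snd S)" unfolding S_def by (rule someI_ex[OF ex])
  then have "fst S = a \<and> snd S = b" using pc_inj[of a b "fst S" "snd S"] assms by auto
  moreover have "unp (pc a b) = S" unfolding unp_def S_def using assms by auto
  ultimately show ?thesis by (simp add: prod_eq_iff)
qed

lemma p1_pc[simp]: "a \<in> C \<Longrightarrow> b \<in> C \<Longrightarrow> p1 (pc a b) = a" by (simp add: p1_def)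
lemma p2_pc[simp]: "a \<in> C \<Longrightarrow> b \<in> C \<Longrightarrow> p2 (pc a b) = b" by (simp add: p2_def)

lemma unp_C: "fst (unp p) \<in> C \<and> snd (unp p) \<in> C"
proof (cases "\<exists>a\<in>C. \<exists>b\<in>C. p = pc a b")
  case True
  then obtain a b where "a \<in> C" "b \<in> C" "p = pc a b" by auto
  then show ?thesis by simp
qed (simp add: unp_def)

lemma p1C[simp]: "p1 p \<in> C" using unp_C by (simp add: p1_def)
lemma p2C[simp]: "p2 p \<in> C" using unp_C by (simp add: p2_def)

lemma p_nopair: "\<not> (\<exists>a\<in>C. \<exists>b\<in>C. p = pc a b) \<Longrightarrow> p1 p = z0 \<and> p2 p = z0"
  by (simp add: p1_def p2_def unp_def)

definition P1 where "P1 = (\<lambda>p\<in>C. p1 p)"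
definition P2 where "P2 = (\<lambda>p\<in>C. p2 p)"

lemma P1_key: assumes "y \<in> C" "a \<in> C" "b \<in> C" "lt b (add (pc a b) o1)"
  shows "(\<exists>b'\<in>C. lt b' (add (pc a b) o1) \<and> pc a b = pc y b') \<longleftrightarrow> y = a"
proof
  assume "\<exists>b'\<in>C. lt b' (add (pc a b) o1) \<and> pc a b = pc y b'"
  then obtain b' where "b' \<in> C" "pc a b = pc y b'" by blast
  then show "y = a" using pc_inj[of a b y b'] assms by auto
next
  assume "y = a" then show "\<exists>b'\<in>C. lt b' (add (pc a b) o1) \<and> pc a b = pc y b'"
    using assms by (intro bexI[of _ b]) auto
qed

lemma P2_key: assumes "y \<in> C" "a \<in> C" "b \<in> C" "lt a (add (pc a b) o1)"
  shows "(\<exists>b'\<in>C. lt b' (add (pc a b) o1) \<and> pc a b = pc b' y) \<longleftrightarrow> y = b"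
proof
  assume "\<exists>b'\<in>C. lt b' (add (pc a b) o1) \<and> pc a b = pc b' y"
  then obtain b' where "b' \<in> C" "pc a b = pc b' y" by blast
  then show "y = b" using pc_inj[of a b b' y] assms by auto
next
  assume "y = b" then show "\<exists>b'\<in>C. lt b' (add (pc a b) o1) \<and> pc a b = pc b' y"
    using assms by (intro bexI[of _ a]) auto
qed

lemma P1_Fs: "P1 \<in> Fs M Xs"
proof (rule graph1[where \<theta>a="Disj (BEx 4 (Plus (Var 0) One) (Eq (Var 0) (pairT (Var 1) (Var 4))))
      (Conj (Neg (BEx 4 (Plus (Var 0) One) (BEx 5 (Plus (Var 0) One) (Eq (Var 0) (pairT (Var 4) (Var 5)))))) (Eq (Var 1) Zero))"
    and \<theta>b="Disj (BEx 4 (Plus (Var 0) One) (Eq (Var 0) (pairT (Var 1) (Var 4))))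
      (Conj (Neg (BEx 4 (Plus (Var 0) One) (BEx 5 (Plus (Var 0) One) (Eq (Var 0) (pairT (Var 4) (Var 5)))))) (Eq (Var 1) Zero))"
    and e="\<lambda>_. z0" and S="\<lambda>_. C"])
  show "P1 \<in> C \<rightarrow>\<^sub>E C" by (auto simp: P1_def)
next
  have key: "((\<exists>b\<in>C. lt b (add p o1) \<and> p = pc y b) \<or> (\<not>(\<exists>a\<in>C. lt a (add p o1) \<and> (\<exists>b\<in>C. lt b (add p o1) \<and> p = pc a b)) \<and> y = z0))
     \<longleftrightarrow> P1 p = y" if "p \<in> C" "y \<in> C" for p y
  proof (cases "\<exists>a\<in>C. \<exists>b\<in>C. p = pc a b")
    case True
    then obtain a b where ab: "a \<in> C" "b \<in> C" "p = pc a b" by auto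
    have "lt a (add p o1)" "lt b (add p o1)" using ab le_pc1 le_pc2 by auto
    have X: "(\<exists>b'\<in>C. lt b' (add p o1) \<and> p = pc y b') \<longleftrightarrow> y = a"
      using P1_key[of y a b] ab \<open>lt a (add p o1)\<close> \<open>lt b (add p o1)\<close> that by simp
    have Y: "\<exists>a\<in>C. lt a (add p o1) \<and> (\<exists>b\<in>C. lt b (add p o1) \<and> p = pc a b)"
      using ab \<open>lt a (add p o1)\<close> \<open>lt b (add p o1)\<close> by blast
    have Z: "P1 p = a" using ab by (simp add: P1_def)
    show ?thesis using X Y Z by argo
  next
    case False
    have "P1 p = z0" using that p_nopair[OF False] by (simp add: P1_def)
    moreover have "\<not>(\<exists>b\<in>C. lt b (add p o1) \<and> p = pc y b)" using False that by blast
    moreover have "\<not>(\<exists>a\<in>C. lt a (add p o1) \<and> (\<exists>b\<in>C. lt b (add p o1) \<and> p = pc a b))" using False by blast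
    ultimately show ?thesis by argo
  qed
  fix i y assume "i \<in> C" "y \<in> C"
  then show "(\<exists>z\<in>C. sat M Xs ((\<lambda>_. z0)(0:=i,1:=y,2:=z)) (\<lambda>_. C) (Disj (BEx 4 (Plus (Var 0) One) (Eq (Var 0) (pairT (Var 1) (Var 4))))
      (Conj (Neg (BEx 4 (Plus (Var 0) One) (BEx 5 (Plus (Var 0) One) (Eq (Var 0) (pairT (Var 4) (Var 5)))))) (Eq (Var 1) Zero)))) \<longleftrightarrow> P1 i = y"
    "(\<forall>z\<in>C. sat M Xs ((\<lambda>_. z0)(0:=i,1:=y,2:=z)) (\<lambda>_. C) (Disj (BEx 4 (Plus (Var 0) One) (Eq (Var 0) (pairT (Var 1) (Var 4))))
      (Conj (Neg (BEx 4 (Plus (Var 0) One) (BEx 5 (Plus (Var 0) One) (Eq (Var 0) (pairT (Var 4) (Var 5)))))) (Eq (Var 1) Zero)))) \<longleftrightarrow> P1 i = y"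
    using key[of i y] by simp_all
qed auto

lemma P2_Fs: "P2 \<in> Fs M Xs"
proof (rule graph1[where \<theta>a="Disj (BEx 4 (Plus (Var 0) One) (Eq (Var 0) (pairT (Var 4) (Var 1))))
      (Conj (Neg (BEx 4 (Plus (Var 0) One) (BEx 5 (Plus (Var 0) One) (Eq (Var 0) (pairT (Var 4) (Var 5)))))) (Eq (Var 1) Zero))"
    and \<theta>b="Disj (BEx 4 (Plus (Var 0) One) (Eq (Var 0) (pairT (Var 4) (Var 1))))
      (Conj (Neg (BEx 4 (Plus (Var 0) One) (BEx 5 (Plus (Var 0) One) (Eq (Var 0) (pairT (Var 4) (Var 5)))))) (Eq (Var 1) Zero))"
    and e="\<lambda>_. z0" and S="\<lambda>_. C"])
  show "P2 \<in> C \<rightarrow>\<^sub>E C" by (auto simp: P2_def)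
next
  have key: "((\<exists>b\<in>C. lt b (add p o1) \<and> p = pc b y) \<or> (\<not>(\<exists>a\<in>C. lt a (add p o1) \<and> (\<exists>b\<in>C. lt b (add p o1) \<and> p = pc a b)) \<and> y = z0))
     \<longleftrightarrow> P2 p = y" if "p \<in> C" "y \<in> C" for p y
  proof (cases "\<exists>a\<in>C. \<exists>b\<in>C. p = pc a b")
    case True
    then obtain a b where ab: "a \<in> C" "b \<in> C" "p = pc a b" by auto
    have "lt a (add p o1)" "lt b (add p o1)" using ab le_pc1 le_pc2 by auto
    have X: "(\<exists>b'\<in>C. lt b' (add p o1) \<and> p = pc b' y) \<longleftrightarrow> y = b"
      using P2_key[of y a b] ab \<open>lt a (add p o1)\<close> \<open>lt b (add p o1)\<close> that by simp
    have Y: "\<exists>a\<in>C. lt a (add p o1) \<and> (\<exists>b\<in>C. lt b (add p o1) \<and> p = pc a b)"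
      using ab \<open>lt a (add p o1)\<close> \<open>lt b (add p o1)\<close> by blast
    have Z: "P2 p = b" using ab by (simp add: P2_def)
    show ?thesis using X Y Z by argo
  next
    case False
    have "P2 p = z0" using that p_nopair[OF False] by (simp add: P2_def)
    moreover have "\<not>(\<exists>b\<in>C. lt b (add p o1) \<and> p = pc b y)" using False that by blast
    moreover have "\<not>(\<exists>a\<in>C. lt a (add p o1) \<and> (\<exists>b\<in>C. lt b (add p o1) \<and> p = pc a b))" using False by blast
    ultimately show ?thesis by argo
  qed
  fix i y assume "i \<in> C" "y \<in> C"
  then show "(\<exists>z\<in>C. sat M Xs ((\<lambda>_. z0)(0:=i,1:=y,2:=z)) (\<lambda>_. C) (Disj (BEx 4 (Plus (Var 0) One) (Eq (Var 0) (pairT (Var 4) (Var 1))))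
      (Conj (Neg (BEx 4 (Plus (Var 0) One) (BEx 5 (Plus (Var 0) One) (Eq (Var 0) (pairT (Var 4) (Var 5)))))) (Eq (Var 1) Zero)))) \<longleftrightarrow> P2 i = y"
    "(\<forall>z\<in>C. sat M Xs ((\<lambda>_. z0)(0:=i,1:=y,2:=z)) (\<lambda>_. C) (Disj (BEx 4 (Plus (Var 0) One) (Eq (Var 0) (pairT (Var 4) (Var 1))))
      (Conj (Neg (BEx 4 (Plus (Var 0) One) (BEx 5 (Plus (Var 0) One) (Eq (Var 0) (pairT (Var 4) (Var 5)))))) (Eq (Var 1) Zero)))) \<longleftrightarrow> P2 i = y"
    using key[of i y] by simp_all
qed auto

end


context base begin

lemma ev_C: "\<forall>v. e v \<in> C \<Longrightarrow> ev M e t \<in> C"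
  by (induction t) auto

definition tf :: "(nat \<Rightarrow> 'a \<Rightarrow> 'a) \<Rightarrow> trm \<Rightarrow> 'a \<Rightarrow> 'a" where
  "tf F t = (\<lambda>i\<in>C. ev M (\<lambda>v. F v i) t)"

lemma tf_Fs: assumes "\<forall>v. F v \<in> Fs M Xs" shows "tf F t \<in> Fs M Xs"
proof (induction t)
  case (Var v)
  have "tf F (Var v) = F v" using assms Fs_ext[of "F v"] by (intro ext) (auto simp: tf_def)
  then show ?case using assms by simp
next
  case Zero
  have "tf F Zero = cst z0" by (intro ext) (auto simp: tf_def cst_def)
  then show ?case using cst_Fs by simp
next
  case One
  have "tf F One = cst o1" by (intro ext) (auto simp: tf_def cst_def)
  then show ?case using cst_Fs by simp
next
  case (Plus s t)
  have "tf F (Plus s t) = fadd (tf F s) (tf F t)" by (intro ext) (auto simp: tf_def fadd_def)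
  then show ?case using fadd_Fs Plus by simp
next
  case (Times s t)
  have "tf F (Times s t) = fmul (tf F s) (tf F t)" by (intro ext) (auto simp: tf_def fmul_def)
  then show ?case using fmul_Fs Times by simp
qed

lemma pull: assumes h: "h \<in> Fs M Xs" and A: "A \<in> Xs" shows "{i\<in>C. h i \<in> A} \<in> Xs"
proof -
  have hC: "\<forall>i\<in>C. h i \<in> C" using h FsC' by auto
  have hX: "fun_code M h \<in> Xs" using h FsD by auto
  show ?thesis
  proof (rule comp1[where \<phi>a="Ex 1 (Conj (Mem (pairT (Var 0) (Var 1)) 0) (Mem (Var 1) 1))"
      and \<phi>b="All 1 (Impl (Mem (pairT (Var 0) (Var 1)) 0) (Mem (Var 1) 1))"
      and e="\<lambda>_. z0" and x=0 and S="(\<lambda>_. C)(0:=fun_code M h, 1:=A)"])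
    show "sigma (Suc 0) (Ex 1 (Conj (Mem (pairT (Var 0) (Var 1)) 0) (Mem (Var 1) 1)))"
      by (intro sigma_ex delta0_sigma1) (simp add: pairT_def)
    show "pi (Suc 0) (All 1 (Impl (Mem (pairT (Var 0) (Var 1)) 0) (Mem (Var 1) 1)))"
      by (intro pi_all delta0_pi1) (simp add: pairT_def)
  qed (use hC hX A in auto)
qed

lemma choice:
  assumes B: "{p\<in>C. R (p1 p) (p2 p)} \<in> Xs" and D: "{i\<in>C. \<exists>y\<in>C. R i y} \<in> Xs"
  shows "\<exists>g\<in>Fs M Xs. \<forall>i\<in>C. (\<exists>y\<in>C. R i y) \<longrightarrow> R i (g i)"
proof -
  define B where "B = {p\<in>C. R (p1 p) (p2 p)}"
  define D where "D = {i\<in>C. \<exists>y\<in>C. R i y}"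
  have inB: "pc i y \<in> B \<longleftrightarrow> R i y" if "i \<in> C" "y \<in> C" for i y
    using that by (simp add: B_def)
  have Bi: "{y\<in>C. R i y} \<in> Xs" if "i \<in> C" for i
  proof -
    have "{y\<in>C. pc i y \<in> B} \<in> Xs"
      by (rule comp0[where \<phi>="Mem (pairT (Var 3) (Var 0)) 0" and e="(\<lambda>_. z0)(3:=i)" and x=0
            and S="(\<lambda>_. C)(0:=B)"]) (use that B in \<open>auto simp: B_def\<close>)
    moreover have "{y\<in>C. pc i y \<in> B} = {y\<in>C. R i y}" using inB that by auto
    ultimately show ?thesis by simp
  qed
  define L where "L i = (\<lambda>m. m \<in> C \<and> R i m \<and> (\<forall>y\<in>C. lt y m \<longrightarrow> \<not> R i y))" for i
  have Lex: "\<exists>m. L i m" if iD: "i \<in> D" for i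
  proof -
    obtain y where "y \<in> C" "R i y" "i \<in> C" using iD by (auto simp: D_def)
    then obtain m where "m \<in> {y\<in>C. R i y}" "\<forall>y\<in>C. lt y m \<longrightarrow> y \<notin> {y\<in>C. R i y}"
      using LNP[OF Bi[of i], of y] by auto
    then show ?thesis unfolding L_def by auto
  qed
  have Luniq: "m = m'" if "L i m" "L i m'" for i m m'
    using that trich[of m m'] unfolding L_def by auto
  define g where "g = (\<lambda>i\<in>C. if i \<in> D then (SOME m. L i m) else z0)"
  have gL: "L i (g i)" if "i \<in> D" for i
    using that someI_ex[OF Lex[OF that]] by (auto simp: g_def D_def)
  have gC1: "g i \<in> C" if "i \<in> C" for i
  proof (cases "i \<in> D")
    case True then show ?thesis using gL[OF True] by (simp add: L_def)
  next
    case False then show ?thesis using that by (simp add: g_def)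
  qed
  have gC: "g \<in> C \<rightarrow>\<^sub>E C" using gC1 by (auto simp: PiE_iff g_def)
  have gD: "g i = y \<longleftrightarrow> (i \<in> D \<and> L i y) \<or> (i \<notin> D \<and> y = z0)" if "i \<in> C" for i y
  proof (cases "i \<in> D")
    case True
    have "L i (g i)" by (rule gL[OF True])
    then show ?thesis using True Luniq[of i "g i" y] by auto
  next
    case False then show ?thesis using that by (auto simp: g_def)
  qed
  have "g \<in> Fs M Xs"
  proof (rule graph1[where \<theta>a="Disj (Conj (Mem (Var 0) 1) (Conj (Mem (pairT (Var 0) (Var 1)) 0) (BAll 4 (Var 1) (Neg (Mem (pairT (Var 0) (Var 4)) 0))))) (Conj (Neg (Mem (Var 0) 1)) (Eq (Var 1) Zero))"
     and \<theta>b="Disj (Conj (Mem (Var 0) 1) (Conj (Mem (pairT (Var 0) (Var 1)) 0) (BAll 4 (Var 1) (Neg (Mem (pairT (Var 0) (Var 4)) 0))))) (Conj (Neg (Mem (Var 0) 1)) (Eq (Var 1) Zero))"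
     and e="\<lambda>_. z0" and S="(\<lambda>_. C)(0:=B, 1:=D)"])
    show "g \<in> C \<rightarrow>\<^sub>E C" by (rule gC)
  next
    fix i y assume iy: "i \<in> C" "y \<in> C"
    have "sat M Xs ((\<lambda>_. z0)(0:=i,1:=y,2:=z)) ((\<lambda>_. C)(0:=B, 1:=D)) (Disj (Conj (Mem (Var 0) 1) (Conj (Mem (pairT (Var 0) (Var 1)) 0) (BAll 4 (Var 1) (Neg (Mem (pairT (Var 0) (Var 4)) 0))))) (Conj (Neg (Mem (Var 0) 1)) (Eq (Var 1) Zero)))
      \<longleftrightarrow> g i = y" for z
      using iy inB unfolding gD[OF iy(1)] by (auto simp: L_def)
    then show "(\<exists>z\<in>C. sat M Xs ((\<lambda>_. z0)(0:=i,1:=y,2:=z)) ((\<lambda>_. C)(0:=B, 1:=D)) (Disj (Conj (Mem (Var 0) 1) (Conj (Mem (pairT (Var 0) (Var 1)) 0) (BAll 4 (Var 1) (Neg (Mem (pairT (Var 0) (Var 4)) 0))))) (Conj (Neg (Mem (Var 0) 1)) (Eq (Var 1) Zero)))) \<longleftrightarrow> g i = y"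
     "(\<forall>z\<in>C. sat M Xs ((\<lambda>_. z0)(0:=i,1:=y,2:=z)) ((\<lambda>_. C)(0:=B, 1:=D)) (Disj (Conj (Mem (Var 0) 1) (Conj (Mem (pairT (Var 0) (Var 1)) 0) (BAll 4 (Var 1) (Neg (Mem (pairT (Var 0) (Var 4)) 0))))) (Conj (Neg (Mem (Var 0) 1)) (Eq (Var 1) Zero)))) \<longleftrightarrow> g i = y"
      by auto
  qed (use B D in \<open>auto simp: B_def D_def pairT_def\<close>)
  moreover have "\<forall>i\<in>C. (\<exists>y\<in>C. R i y) \<longrightarrow> R i (g i)" using gL by (auto simp: D_def L_def)
  ultimately show ?thesis by blast
qed

end


lemma fo_push: "first_order d \<Longrightarrow> first_order \<phi> \<Longrightarrow> first_order (push d \<phi>)"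
  by (induction d \<phi> rule: push.induct) auto

lemma fo_bexblock: "first_order (bexblock xs t \<phi>) = first_order \<phi>"
  by (induction xs) (auto simp: bexblock_def)

lemma fo_codeEq: "first_order (Eq (Var Q) (codeT vs))" by simp

context base begin

definition Def :: "fm \<Rightarrow> bool" where
  "Def \<phi> \<longleftrightarrow> (\<forall>F. (\<forall>v. F v \<in> Fs M Xs) \<longrightarrow> {i\<in>C. sat M Xs (\<lambda>v. F v i) (\<lambda>_. {}) \<phi>} \<in> Xs)"

lemma codeT_C: "\<forall>v\<in>set vs. e v \<in> C \<Longrightarrow> ev M e (codeT vs) \<in> C"
  by (induction vs) auto

lemma code_inj: "\<forall>v\<in>set vs. e v \<in> C \<Longrightarrow> \<forall>v\<in>set vs. e' v \<in> C \<Longrightarrow>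
   ev M e (codeT vs) = ev M e' (codeT vs) \<Longrightarrow> \<forall>v\<in>set vs. e v = e' v"
proof (induction vs)
  case (Cons x vs)
  have eq: "pc (e x) (ev M e (codeT vs)) = pc (e' x) (ev M e' (codeT vs))" using Cons.prems(3) by simp
  have c1: "ev M e (codeT vs) \<in> C" "ev M e' (codeT vs) \<in> C" using codeT_C[of vs e] codeT_C[of vs e'] Cons.prems(1,2) by auto
  have c2: "e x \<in> C" "e' x \<in> C" using Cons.prems(1,2) by auto
  have "e x = e' x \<and> ev M e (codeT vs) = ev M e' (codeT vs)"
    by (rule pc_inj[OF c2(1) c1(1) c2(2) c1(2) eq])
  moreover have "\<forall>v\<in>set vs. e v = e' v"
    by (rule Cons.IH) (use Cons.prems(1,2) calculation in auto)
  ultimately show ?case by simp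
qed simp

lemma code_le: "\<forall>v\<in>set vs. e v \<in> C \<Longrightarrow> v \<in> set vs \<Longrightarrow> le (e v) (ev M e (codeT vs))"
proof (induction vs)
  case (Cons x vs)
  have c: "ev M e (codeT vs) \<in> C" using codeT_C[of vs e] Cons.prems by auto
  show ?case
  proof (cases "v = x")
    case True then show ?thesis using pc_le1 Cons.prems c by auto
  next
    case False
    then have "le (e v) (ev M e (codeT vs))" using Cons by auto
    moreover have "le (ev M e (codeT vs)) (ev M e (codeT (x#vs)))" using pc_le2 Cons.prems c by auto
    ultimately show ?thesis using le_trans Cons.prems c False by (meson codeT_C)
  qed
qed simp

lemma def_from_A:
  assumes fo: "first_order \<theta>" and A: "A \<in> Xs" and fvs: "fv \<theta> \<subseteq> set vs"
    and Aq: "\<And>q. q \<in> C \<Longrightarrow> q \<in> A \<longleftrightarrow> (\<exists>e'. (\<forall>v\<in>set vs. e' v \<in> C) \<and> q = ev M e' (codeT vs) \<and> sat M Xs e' (\<lambda>_. {}) \<theta>)"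
  shows "Def \<theta>"
  unfolding Def_def
proof (intro allI impI)
  fix F :: "nat \<Rightarrow> 'a \<Rightarrow> 'a" assume F: "\<forall>v. F v \<in> Fs M Xs"
  define h where "h = tf F (codeT vs)"
  have h: "h \<in> Fs M Xs" unfolding h_def using tf_Fs F by auto
  have "{i\<in>C. h i \<in> A} \<in> Xs" using pull h A by auto
  moreover have "{i\<in>C. h i \<in> A} = {i\<in>C. sat M Xs (\<lambda>v. F v i) (\<lambda>_. {}) \<theta>}"
  proof (intro Collect_cong conj_cong refl)
    fix i assume i: "i \<in> C"
    have FiC: "\<forall>v. F v i \<in> C" using F i FsC by auto
    have hi: "h i = ev M (\<lambda>v. F v i) (codeT vs)" using i by (simp add: h_def tf_def)
    have hC: "h i \<in> C" using FsC h i by auto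
    show "h i \<in> A \<longleftrightarrow> sat M Xs (\<lambda>v. F v i) (\<lambda>_. {}) \<theta>"
    proof
      assume "h i \<in> A"
      then obtain e' where e': "\<forall>v\<in>set vs. e' v \<in> C" "h i = ev M e' (codeT vs)" "sat M Xs e' (\<lambda>_. {}) \<theta>"
        using Aq hC by auto
      have "\<forall>v\<in>set vs. e' v = F v i" using code_inj[of vs e' "\<lambda>v. F v i"] e' FiC hi by auto
      then have "sat M Xs e' (\<lambda>_. {}) \<theta> = sat M Xs (\<lambda>v. F v i) (\<lambda>_. {}) \<theta>"
        using fvs by (intro sat_cong) auto
      then show "sat M Xs (\<lambda>v. F v i) (\<lambda>_. {}) \<theta>" using e'(3) by simp
    next
      assume "sat M Xs (\<lambda>v. F v i) (\<lambda>_. {}) \<theta>"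
      then show "h i \<in> A" using Aq[OF hC] FiC hi by auto
    qed
  qed
  ultimately show "{i\<in>C. sat M Xs (\<lambda>v. F v i) (\<lambda>_. {}) \<theta>} \<in> Xs" by simp
qed

lemma Def_delta0: assumes d: "delta0 \<theta>" and fo: "first_order \<theta>" shows "Def \<theta>"
proof -
  obtain Q where Q: "Q \<notin> vars \<theta>" using ex_new_if_finite[of "vars \<theta>"] by auto
  obtain vs where vs: "set vs = fv \<theta>" using finite_list[of "fv \<theta>"] finite_subset[OF fv_vars] by auto
  have Qvs: "Q \<notin> set vs" using Q vs fv_vars by auto
  define \<Psi> where "\<Psi> = bexblock vs (Plus (Var Q) One) (Conj (Eq (Var Q) (codeT vs)) \<theta>)"
  define A where "A = {q\<in>C. sat M Xs ((\<lambda>_. z0)(Q:=q)) (\<lambda>_. C) \<Psi>}"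
  have AX: "A \<in> Xs" unfolding A_def
    by (rule comp0[where \<phi>=\<Psi> and e="\<lambda>_. z0" and x=Q and S="\<lambda>_. C"])
       (use d in \<open>auto simp: \<Psi>_def intro!: bexblock_delta0\<close>)
  have Aq: "q \<in> A \<longleftrightarrow> (\<exists>e'. (\<forall>v\<in>set vs. e' v \<in> C) \<and> q = ev M e' (codeT vs) \<and> sat M Xs e' (\<lambda>_. {}) \<theta>)"
    if q: "q \<in> C" for q
  proof -
    have "q \<in> A \<longleftrightarrow> (\<exists>e'. (\<forall>v\<in>set vs. e' v \<in> C \<and> lt (e' v) (add q o1)) \<and> (\<forall>v. v \<notin> set vs \<longrightarrow> e' v = ((\<lambda>_. z0)(Q:=q)) v)
        \<and> e' Q = ev M e' (codeT vs) \<and> sat M Xs e' (\<lambda>_. C) \<theta>)"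
      unfolding A_def \<Psi>_def using q Qvs by (subst bexblock_sat) auto
    also have "\<dots> \<longleftrightarrow> (\<exists>e'. (\<forall>v\<in>set vs. e' v \<in> C) \<and> q = ev M e' (codeT vs) \<and> sat M Xs e' (\<lambda>_. {}) \<theta>)"
    proof
      assume "\<exists>e'. (\<forall>v\<in>set vs. e' v \<in> C \<and> lt (e' v) (add q o1)) \<and> (\<forall>v. v \<notin> set vs \<longrightarrow> e' v = ((\<lambda>_. z0)(Q:=q)) v)
        \<and> e' Q = ev M e' (codeT vs) \<and> sat M Xs e' (\<lambda>_. C) \<theta>"
      then obtain e' where "\<forall>v\<in>set vs. e' v \<in> C" "\<forall>v. v \<notin> set vs \<longrightarrow> e' v = ((\<lambda>_. z0)(Q:=q)) v"
        "e' Q = ev M e' (codeT vs)" "sat M Xs e' (\<lambda>_. C) \<theta>" by blast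
      then show "\<exists>e'. (\<forall>v\<in>set vs. e' v \<in> C) \<and> q = ev M e' (codeT vs) \<and> sat M Xs e' (\<lambda>_. {}) \<theta>"
        using Qvs sat_S[OF fo, of M Xs e' "\<lambda>_. C" "\<lambda>_. {}"] by (intro exI[of _ e']) auto
    next
      assume "\<exists>e'. (\<forall>v\<in>set vs. e' v \<in> C) \<and> q = ev M e' (codeT vs) \<and> sat M Xs e' (\<lambda>_. {}) \<theta>"
      then obtain e'' where e'': "\<forall>v\<in>set vs. e'' v \<in> C" "q = ev M e'' (codeT vs)" "sat M Xs e'' (\<lambda>_. {}) \<theta>"
        by blast
      define e' where "e' = (\<lambda>v. if v \<in> set vs then e'' v else ((\<lambda>_. z0)(Q:=q)) v)"
      have "ev M e' (codeT vs) = ev M e'' (codeT vs)" by (rule ev_cong) (auto simp: e'_def)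
      moreover have "sat M Xs e' (\<lambda>_. C) \<theta> = sat M Xs e'' (\<lambda>_. C) \<theta>" by (rule sat_cong) (use vs in \<open>auto simp: e'_def\<close>)
      moreover have "lt (e'' v) (add q o1)" if "v \<in> set vs" for v
        using code_le[OF e''(1) that] e'' that le_lt codeT_C by auto
      ultimately show "\<exists>e'. (\<forall>v\<in>set vs. e' v \<in> C \<and> lt (e' v) (add q o1)) \<and> (\<forall>v. v \<notin> set vs \<longrightarrow> e' v = ((\<lambda>_. z0)(Q:=q)) v)
        \<and> e' Q = ev M e' (codeT vs) \<and> sat M Xs e' (\<lambda>_. C) \<theta>"
        using e'' Qvs sat_S[OF fo, of M Xs e'' "\<lambda>_. C" "\<lambda>_. {}"] by (intro exI[of _ e']) (auto simp: e'_def)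
    qed
    finally show ?thesis .
  qed
  show ?thesis by (rule def_from_A[OF fo AX _ Aq]) (use vs in auto)
qed

lemma Def_neg: "Def \<phi> \<Longrightarrow> Def (Neg \<phi>)"
  unfolding Def_def
proof (intro allI impI)
  fix F :: "nat \<Rightarrow> 'a \<Rightarrow> 'a" assume "\<forall>F. (\<forall>v. F v \<in> Fs M Xs) \<longrightarrow> {i\<in>C. sat M Xs (\<lambda>v. F v i) (\<lambda>_. {}) \<phi>} \<in> Xs" "\<forall>v. F v \<in> Fs M Xs"
  then have "C - {i\<in>C. sat M Xs (\<lambda>v. F v i) (\<lambda>_. {}) \<phi>} \<in> Xs" using Xs_compl by auto
  moreover have "C - {i\<in>C. sat M Xs (\<lambda>v. F v i) (\<lambda>_. {}) \<phi>} = {i\<in>C. sat M Xs (\<lambda>v. F v i) (\<lambda>_. {}) (Neg \<phi>)}" by auto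
  ultimately show "{i\<in>C. sat M Xs (\<lambda>v. F v i) (\<lambda>_. {}) (Neg \<phi>)} \<in> Xs" by simp
qed

lemma Def_equiv: "Def \<phi> \<Longrightarrow> (\<And>e. sat M Xs e (\<lambda>_. {}) \<psi> = sat M Xs e (\<lambda>_. {}) \<phi>) \<Longrightarrow> Def \<psi>"
  unfolding Def_def by simp

lemma Def_dual: "Def (dual \<phi>) \<Longrightarrow> Def \<phi>"
  by (rule Def_equiv[OF Def_neg]) (auto simp: dual_sat)

end

locale full = base +
  fixes n :: nat
  assumes sc: "sigma_comp M Xs n"
begin

lemma Def_sigma_n: assumes s: "sigma n \<theta>" and fo: "first_order \<theta>" and n: "n \<noteq> 0" shows "Def \<theta>"
proof -
  obtain k where k: "n = Suc k" using n by (cases n) auto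
  obtain Q where Q: "Q \<notin> vars \<theta>" using ex_new_if_finite[of "vars \<theta>"] by auto
  obtain vs where vs: "set vs = fv \<theta>" using finite_list[of "fv \<theta>"] finite_subset[OF fv_vars] by auto
  have Qvs: "Q \<notin> set vs" using Q vs fv_vars by auto
  define d where "d = Eq (Var Q) (codeT vs)"
  define \<Psi> where "\<Psi> = exblock vs (push d \<theta>)"
  define A where "A = {q\<in>C. sat M Xs ((\<lambda>_. z0)(Q:=q)) (\<lambda>_. {}) \<Psi>}"
  have sP: "sigma n \<Psi>" unfolding \<Psi>_def k
    by (rule exblock_sigma, rule push_sigma_pi(1)) (use s k in \<open>auto simp: d_def\<close>)
  have foP: "first_order \<Psi>" unfolding \<Psi>_def d_def using fo by (simp add: exblock_fo fo_push)
  have AX: "A \<in> Xs" using sc sP foP unfolding sigma_comp_def A_def by auto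
  have dpb: "fv d \<inter> pbv \<theta> = {}" unfolding d_def using vs pbv_fv[of \<theta>] Q pbv_vars by auto
  have Aq: "q \<in> A \<longleftrightarrow> (\<exists>e'. (\<forall>v\<in>set vs. e' v \<in> C) \<and> q = ev M e' (codeT vs) \<and> sat M Xs e' (\<lambda>_. {}) \<theta>)"
    if q: "q \<in> C" for q
  proof -
    have "q \<in> A \<longleftrightarrow> (\<exists>e'. (\<forall>v\<in>set vs. e' v \<in> C) \<and> (\<forall>v. v \<notin> set vs \<longrightarrow> e' v = ((\<lambda>_. z0)(Q:=q)) v)
        \<and> e' Q = ev M e' (codeT vs) \<and> sat M Xs e' (\<lambda>_. {}) \<theta>)"
      unfolding A_def \<Psi>_def exblock_sat using q push_sat[OF C_ne dpb] by (simp add: d_def)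
    also have "\<dots> \<longleftrightarrow> (\<exists>e'. (\<forall>v\<in>set vs. e' v \<in> C) \<and> q = ev M e' (codeT vs) \<and> sat M Xs e' (\<lambda>_. {}) \<theta>)"
    proof
      assume "\<exists>e'. (\<forall>v\<in>set vs. e' v \<in> C) \<and> (\<forall>v. v \<notin> set vs \<longrightarrow> e' v = ((\<lambda>_. z0)(Q:=q)) v)
        \<and> e' Q = ev M e' (codeT vs) \<and> sat M Xs e' (\<lambda>_. {}) \<theta>"
      then obtain e' where "\<forall>v\<in>set vs. e' v \<in> C" "\<forall>v. v \<notin> set vs \<longrightarrow> e' v = ((\<lambda>_. z0)(Q:=q)) v"
        "e' Q = ev M e' (codeT vs)" "sat M Xs e' (\<lambda>_. {}) \<theta>" by blast
      then show "\<exists>e'. (\<forall>v\<in>set vs. e' v \<in> C) \<and> q = ev M e' (codeT vs) \<and> sat M Xs e' (\<lambda>_. {}) \<theta>"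
        using Qvs by (intro exI[of _ e']) auto
    next
      assume "\<exists>e'. (\<forall>v\<in>set vs. e' v \<in> C) \<and> q = ev M e' (codeT vs) \<and> sat M Xs e' (\<lambda>_. {}) \<theta>"
      then obtain e'' where e'': "\<forall>v\<in>set vs. e'' v \<in> C" "q = ev M e'' (codeT vs)" "sat M Xs e'' (\<lambda>_. {}) \<theta>"
        by blast
      define e' where "e' = (\<lambda>v. if v \<in> set vs then e'' v else ((\<lambda>_. z0)(Q:=q)) v)"
      have "ev M e' (codeT vs) = ev M e'' (codeT vs)" by (rule ev_cong) (auto simp: e'_def)
      moreover have "sat M Xs e' (\<lambda>_. {}) \<theta> = sat M Xs e'' (\<lambda>_. {}) \<theta>" by (rule sat_cong) (use vs in \<open>auto simp: e'_def\<close>)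
      ultimately show "\<exists>e'. (\<forall>v\<in>set vs. e' v \<in> C) \<and> (\<forall>v. v \<notin> set vs \<longrightarrow> e' v = ((\<lambda>_. z0)(Q:=q)) v)
        \<and> e' Q = ev M e' (codeT vs) \<and> sat M Xs e' (\<lambda>_. {}) \<theta>"
        using e'' Qvs by (intro exI[of _ e']) (auto simp: e'_def)
    qed
    finally show ?thesis .
  qed
  show ?thesis by (rule def_from_A[OF fo AX _ Aq]) (use vs in auto)
qed

lemma Def_sigma: assumes "sigma k \<theta>" "k \<le> n" "first_order \<theta>" shows "Def \<theta>"
proof (cases "k = 0")
  case True then show ?thesis using assms sigma0_delta0 Def_delta0 by auto
next
  case False
  then have "n \<noteq> 0" using assms by auto
  moreover have "sigma n \<theta>" using sigma_mono_le assms by auto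
  ultimately show ?thesis using Def_sigma_n assms by auto
qed

lemma Def_pi: assumes "pi k \<theta>" "k \<le> n" "first_order \<theta>" shows "Def \<theta>"
  using Def_dual Def_sigma[OF dual_sigma_pi(2)[OF assms(1)] assms(2)] assms(3) dual_fo by auto

end


context base begin

abbreviation "UP \<equiv> ultrapower M Xs U"
abbreviation "cl \<equiv> ucls M Xs U"
abbreviation "FS \<equiv> Fs M Xs"

lemma U_Xs: "A \<in> U \<Longrightarrow> A \<in> Xs" using uf unfolding ultrafilter_on_def by auto
lemma C_U[simp]: "C \<in> U" using uf unfolding ultrafilter_on_def by auto
lemma empty_U[simp]: "{} \<notin> U" using uf unfolding ultrafilter_on_def by auto
lemma U_int: "A \<in> U \<Longrightarrow> B \<in> U \<Longrightarrow> A \<inter> B \<in> U" using uf unfolding ultrafilter_on_def by auto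
lemma U_up: "A \<in> U \<Longrightarrow> B \<in> Xs \<Longrightarrow> A \<subseteq> B \<Longrightarrow> B \<in> U" using uf unfolding ultrafilter_on_def by auto
lemma U_ultra: "A \<in> Xs \<Longrightarrow> A \<in> U \<or> C - A \<in> U" using uf unfolding ultrafilter_on_def by auto
lemma U_compl: assumes "A \<in> Xs" shows "C - A \<in> U \<longleftrightarrow> A \<notin> U"
proof
  assume "C - A \<in> U"
  show "A \<notin> U"
  proof
    assume "A \<in> U"
    then have "A \<inter> (C - A) \<in> U" using U_int \<open>C - A \<in> U\<close> by blast
    moreover have "A \<inter> (C - A) = {}" by blast
    ultimately show False by simp
  qed
qed (use U_ultra assms in auto)
lemma U_int_iff: "A \<in> Xs \<Longrightarrow> B \<in> Xs \<Longrightarrow> A \<inter> B \<in> U \<longleftrightarrow> A \<in> U \<and> B \<in> U"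
  using U_int U_up Xs_inter by blast

lemma Fenv: "\<forall>v. F v \<in> FS \<Longrightarrow> i \<in> C \<Longrightarrow> \<forall>v. F v i \<in> C" using FsC by auto

definition eqset where "eqset f g = {i\<in>C. f i = g i}"
definition ltset where "ltset f g = {i\<in>C. lt (f i) (g i)}"

lemma eqset_Xs: assumes f: "f \<in> FS" and g: "g \<in> FS" shows "eqset f g \<in> Xs"
proof -
  define F where "F = (\<lambda>v::nat. if v = 1 then g else f)"
  have "\<forall>v. F v \<in> FS" using f g by (auto simp: F_def)
  then have "{i\<in>C. sat M Xs (\<lambda>v. F v i) (\<lambda>_. {}) (Eq (Var 0) (Var 1))} \<in> Xs"
    using Def_delta0[of "Eq (Var 0) (Var 1)"] unfolding Def_def by auto
  then show ?thesis by (simp add: eqset_def F_def)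
qed

lemma ltset_Xs: assumes f: "f \<in> FS" and g: "g \<in> FS" shows "ltset f g \<in> Xs"
proof -
  define F where "F = (\<lambda>v::nat. if v = 1 then g else f)"
  have "\<forall>v. F v \<in> FS" using f g by (auto simp: F_def)
  then have "{i\<in>C. sat M Xs (\<lambda>v. F v i) (\<lambda>_. {}) (Lt (Var 0) (Var 1))} \<in> Xs"
    using Def_delta0[of "Lt (Var 0) (Var 1)"] unfolding Def_def by auto
  then show ?thesis by (simp add: ltset_def F_def)
qed

lemma ueq_iff: "ueq M U f g \<longleftrightarrow> eqset f g \<in> U" by (simp add: ueq_def eqset_def)

lemma ueq_refl: "f \<in> FS \<Longrightarrow> ueq M U f f" by (simp add: ueq_iff eqset_def)
lemma ueq_sym: "ueq M U f g \<Longrightarrow> ueq M U g f" by (simp add: ueq_def eq_commute)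
lemma ueq_trans: assumes "f \<in> FS" "g \<in> FS" "h \<in> FS" "ueq M U f g" "ueq M U g h" shows "ueq M U f h"
proof -
  have "eqset f g \<inter> eqset g h \<in> U" using assms U_int by (simp add: ueq_iff)
  moreover have "eqset f g \<inter> eqset g h \<subseteq> eqset f h" by (auto simp: eqset_def)
  ultimately show ?thesis using U_up eqset_Xs assms by (simp add: ueq_iff)
qed

lemma cl_eq: assumes "f \<in> FS" "g \<in> FS" shows "cl f = cl g \<longleftrightarrow> ueq M U f g"
proof
  assume "cl f = cl g"
  then have "g \<in> cl f" using assms ueq_refl by (auto simp: ucls_def)
  then show "ueq M U f g" by (simp add: ucls_def)
next
  assume H: "ueq M U f g"
  show "cl f = cl g"
    unfolding ucls_def using H ueq_sym ueq_trans assms by blast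
qed

lemma urep: assumes "f \<in> FS" shows "urep (cl f) \<in> FS \<and> ueq M U f (urep (cl f))"
proof -
  have "f \<in> cl f" using assms ueq_refl by (simp add: ucls_def)
  then have "urep (cl f) \<in> cl f" unfolding urep_def using someI[of "\<lambda>x. x \<in> cl f" f] by simp
  then show ?thesis by (simp add: ucls_def)
qed

lemma up_carr: "carr UP = cl ` FS" by (simp add: ultrapower_def)

lemma ueq_fun2: assumes "f \<in> FS" "f' \<in> FS" "g \<in> FS" "g' \<in> FS" "ueq M U f f'" "ueq M U g g'"
  and "h \<in> FS" "h' \<in> FS" "\<And>i. i \<in> C \<Longrightarrow> f i = f' i \<Longrightarrow> g i = g' i \<Longrightarrow> h i = h' i"
  shows "ueq M U h h'"
proof -
  have "eqset f f' \<inter> eqset g g' \<in> U" using assms U_int by (simp add: ueq_iff)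
  moreover have "eqset f f' \<inter> eqset g g' \<subseteq> eqset h h'" using assms(9) by (auto simp: eqset_def)
  ultimately show ?thesis using U_up eqset_Xs assms(7,8) by (simp add: ueq_iff)
qed

lemma up_pl: assumes "f \<in> FS" "g \<in> FS" shows "pl UP (cl f) (cl g) = cl (fadd f g)"
proof -
  obtain f' g' where f': "f' \<in> FS" "ueq M U f f'" "urep (cl f) = f'" and g': "g' \<in> FS" "ueq M U g g'" "urep (cl g) = g'"
    using urep assms by blast
  have "pl UP (cl f) (cl g) = cl (fadd f' g')" by (simp add: ultrapower_def f'(3) g'(3) fadd_def)
  also have "\<dots> = cl (fadd f g)"
    using cl_eq[of "fadd f' g'" "fadd f g"] fadd_Fs assms f' g'
      ueq_fun2[of f' f g' g "fadd f' g'" "fadd f g"] ueq_sym by (simp add: fadd_def)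
  finally show ?thesis .
qed

lemma up_tm: assumes "f \<in> FS" "g \<in> FS" shows "tm UP (cl f) (cl g) = cl (fmul f g)"
proof -
  obtain f' g' where f': "f' \<in> FS" "ueq M U f f'" "urep (cl f) = f'" and g': "g' \<in> FS" "ueq M U g g'" "urep (cl g) = g'"
    using urep assms by blast
  have "tm UP (cl f) (cl g) = cl (fmul f' g')" by (simp add: ultrapower_def f'(3) g'(3) fmul_def)
  also have "\<dots> = cl (fmul f g)"
    using cl_eq[of "fmul f' g'" "fmul f g"] fmul_Fs assms f' g'
      ueq_fun2[of f' f g' g "fmul f' g'" "fmul f g"] ueq_sym by (simp add: fmul_def)
  finally show ?thesis .
qed

lemma up_ls: assumes "f \<in> FS" "g \<in> FS" shows "ls UP (cl f) (cl g) \<longleftrightarrow> ltset f g \<in> U"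
proof -
  obtain f' g' where f': "f' \<in> FS" "ueq M U f f'" "urep (cl f) = f'" and g': "g' \<in> FS" "ueq M U g g'" "urep (cl g) = g'"
    using urep assms by blast
  have "ls UP (cl f) (cl g) \<longleftrightarrow> ltset f' g' \<in> U" by (simp add: ultrapower_def f'(3) g'(3) ltset_def)
  also have "\<dots> \<longleftrightarrow> ltset f g \<in> U"
  proof -
    have E: "eqset f f' \<inter> eqset g g' \<in> U" using f' g' U_int by (simp add: ueq_iff)
    have "ltset f' g' \<inter> (eqset f f' \<inter> eqset g g') \<subseteq> ltset f g" "ltset f g \<inter> (eqset f f' \<inter> eqset g g') \<subseteq> ltset f' g'"
      by (auto simp: ltset_def eqset_def)
    then show ?thesis using E U_int U_up ltset_Xs assms f' g' by meson
  qed
  finally show ?thesis .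
qed

lemma up_zr: "zr UP = cl (cst z0)" by (simp add: ultrapower_def cst_def)
lemma up_on: "on UP = cl (cst o1)" by (simp add: ultrapower_def cst_def)

lemma evU: assumes F: "\<forall>v. F v \<in> FS" shows "ev UP (\<lambda>v. cl (F v)) t = cl (tf F t)"
proof (induction t)
  case (Var v)
  have "tf F (Var v) = F v" using F Fs_ext[of "F v"] by (intro ext) (auto simp: tf_def)
  then show ?case by simp
next
  case Zero
  have "tf F Zero = cst z0" by (intro ext) (auto simp: tf_def cst_def)
  then show ?case by (simp add: up_zr)
next
  case One
  have "tf F One = cst o1" by (intro ext) (auto simp: tf_def cst_def)
  then show ?case by (simp add: up_on)
next
  case (Plus s t)
  have "tf F (Plus s t) = fadd (tf F s) (tf F t)" by (intro ext) (auto simp: tf_def fadd_def)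
  then show ?case using Plus up_pl tf_Fs F by simp
next
  case (Times s t)
  have "tf F (Times s t) = fmul (tf F s) (tf F t)" by (intro ext) (auto simp: tf_def fmul_def)
  then show ?case using Times up_tm tf_Fs F by simp
qed

end


lemma sat_Disj_eq: "sat M Xs e S (Disj \<phi> \<psi>) = sat M Xs e S (Neg (Conj (Neg \<phi>) (Neg \<psi>)))" by simp
lemma sat_Impl_eq: "sat M Xs e S (Impl \<phi> \<psi>) = sat M Xs e S (Neg (Conj \<phi> (Neg \<psi>)))" by simp
lemma sat_All_eq: "sat M Xs e S (All x \<phi>) = sat M Xs e S (Neg (Ex x (Neg \<phi>)))" by simp
lemma sat_BAll_eq: "sat M Xs e S (BAll x t \<phi>) = sat M Xs e S (Neg (BEx x t (Neg \<phi>)))" by simp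

context base begin

definition Los :: "fm \<Rightarrow> bool" where
  "Los \<phi> \<longleftrightarrow> (\<forall>F. (\<forall>v. F v \<in> FS) \<longrightarrow>
     (sat UP {} (\<lambda>v. cl (F v)) (\<lambda>_. {}) \<phi> \<longleftrightarrow> {i\<in>C. sat M Xs (\<lambda>v. F v i) (\<lambda>_. {}) \<phi>} \<in> U))"

lemma DefD: "Def \<phi> \<Longrightarrow> \<forall>v. F v \<in> FS \<Longrightarrow> {i\<in>C. sat M Xs (\<lambda>v. F v i) (\<lambda>_. {}) \<phi>} \<in> Xs"
  unfolding Def_def by auto

lemma LosD: "Los \<phi> \<Longrightarrow> \<forall>v. F v \<in> FS \<Longrightarrow>
  sat UP {} (\<lambda>v. cl (F v)) (\<lambda>_. {}) \<phi> \<longleftrightarrow> {i\<in>C. sat M Xs (\<lambda>v. F v i) (\<lambda>_. {}) \<phi>} \<in> U"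
  unfolding Los_def by auto

lemma Los_equiv: "Los \<phi> \<Longrightarrow> (\<And>e. sat M Xs e (\<lambda>_. {}) \<psi> = sat M Xs e (\<lambda>_. {}) \<phi>)
   \<Longrightarrow> (\<And>E. sat UP {} E (\<lambda>_. {}) \<psi> = sat UP {} E (\<lambda>_. {}) \<phi>) \<Longrightarrow> Los \<psi>"
  unfolding Los_def by simp

lemma Def_conj: "Def \<phi> \<Longrightarrow> Def \<psi> \<Longrightarrow> Def (Conj \<phi> \<psi>)"
  unfolding Def_def
proof (intro allI impI)
  fix F :: "nat \<Rightarrow> 'a \<Rightarrow> 'a"
  assume "\<forall>F. (\<forall>v. F v \<in> FS) \<longrightarrow> {i \<in> C. sat M Xs (\<lambda>v. F v i) (\<lambda>_. {}) \<phi>} \<in> Xs"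
    "\<forall>F. (\<forall>v. F v \<in> FS) \<longrightarrow> {i \<in> C. sat M Xs (\<lambda>v. F v i) (\<lambda>_. {}) \<psi>} \<in> Xs" "\<forall>v. F v \<in> FS"
  then have "{i \<in> C. sat M Xs (\<lambda>v. F v i) (\<lambda>_. {}) \<phi>} \<inter> {i \<in> C. sat M Xs (\<lambda>v. F v i) (\<lambda>_. {}) \<psi>} \<in> Xs"
    using Xs_inter by auto
  moreover have "{i \<in> C. sat M Xs (\<lambda>v. F v i) (\<lambda>_. {}) \<phi>} \<inter> {i \<in> C. sat M Xs (\<lambda>v. F v i) (\<lambda>_. {}) \<psi>}
     = {i \<in> C. sat M Xs (\<lambda>v. F v i) (\<lambda>_. {}) (Conj \<phi> \<psi>)}" by auto
  ultimately show "{i \<in> C. sat M Xs (\<lambda>v. F v i) (\<lambda>_. {}) (Conj \<phi> \<psi>)} \<in> Xs" by simp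
qed

lemma Los_Eq: "Los (Eq s t)"
  unfolding Los_def
proof (intro allI impI)
  fix F :: "nat \<Rightarrow> 'a \<Rightarrow> 'a" assume F: "\<forall>v. F v \<in> FS"
  have "sat UP {} (\<lambda>v. cl (F v)) (\<lambda>_. {}) (Eq s t) \<longleftrightarrow> cl (tf F s) = cl (tf F t)"
    using evU[OF F] by simp
  also have "\<dots> \<longleftrightarrow> eqset (tf F s) (tf F t) \<in> U" using cl_eq tf_Fs F ueq_iff by simp
  also have "eqset (tf F s) (tf F t) = {i\<in>C. sat M Xs (\<lambda>v. F v i) (\<lambda>_. {}) (Eq s t)}"
    by (auto simp: eqset_def tf_def)
  finally show "sat UP {} (\<lambda>v. cl (F v)) (\<lambda>_. {}) (Eq s t) \<longleftrightarrow> {i\<in>C. sat M Xs (\<lambda>v. F v i) (\<lambda>_. {}) (Eq s t)} \<in> U" .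
qed

lemma Los_Lt: "Los (Lt s t)"
  unfolding Los_def
proof (intro allI impI)
  fix F :: "nat \<Rightarrow> 'a \<Rightarrow> 'a" assume F: "\<forall>v. F v \<in> FS"
  have "sat UP {} (\<lambda>v. cl (F v)) (\<lambda>_. {}) (Lt s t) \<longleftrightarrow> ls UP (cl (tf F s)) (cl (tf F t))"
    using evU[OF F] by simp
  also have "\<dots> \<longleftrightarrow> ltset (tf F s) (tf F t) \<in> U" using up_ls tf_Fs F by simp
  also have "ltset (tf F s) (tf F t) = {i\<in>C. sat M Xs (\<lambda>v. F v i) (\<lambda>_. {}) (Lt s t)}"
    by (auto simp: ltset_def tf_def)
  finally show "sat UP {} (\<lambda>v. cl (F v)) (\<lambda>_. {}) (Lt s t) \<longleftrightarrow> {i\<in>C. sat M Xs (\<lambda>v. F v i) (\<lambda>_. {}) (Lt s t)} \<in> U" .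
qed

lemma Los_Neg: assumes "Def \<phi>" "Los \<phi>" shows "Los (Neg \<phi>)"
  unfolding Los_def
proof (intro allI impI)
  fix F :: "nat \<Rightarrow> 'a \<Rightarrow> 'a" assume F: "\<forall>v. F v \<in> FS"
  define A where "A = {i\<in>C. sat M Xs (\<lambda>v. F v i) (\<lambda>_. {}) \<phi>}"
  have A: "A \<in> Xs" using DefD[OF assms(1) F] by (simp add: A_def)
  have "{i\<in>C. sat M Xs (\<lambda>v. F v i) (\<lambda>_. {}) (Neg \<phi>)} = C - A" by (auto simp: A_def)
  then show "sat UP {} (\<lambda>v. cl (F v)) (\<lambda>_. {}) (Neg \<phi>) \<longleftrightarrow> {i\<in>C. sat M Xs (\<lambda>v. F v i) (\<lambda>_. {}) (Neg \<phi>)} \<in> U"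
    using LosD[OF assms(2) F] U_compl[OF A] by (simp add: A_def)
qed

lemma Los_Conj: assumes "Def \<phi>" "Def \<psi>" "Los \<phi>" "Los \<psi>" shows "Los (Conj \<phi> \<psi>)"
  unfolding Los_def
proof (intro allI impI)
  fix F :: "nat \<Rightarrow> 'a \<Rightarrow> 'a" assume F: "\<forall>v. F v \<in> FS"
  define A where "A = {i\<in>C. sat M Xs (\<lambda>v. F v i) (\<lambda>_. {}) \<phi>}"
  define B where "B = {i\<in>C. sat M Xs (\<lambda>v. F v i) (\<lambda>_. {}) \<psi>}"
  have A: "A \<in> Xs" using DefD[OF assms(1) F] by (simp add: A_def)
  have B: "B \<in> Xs" using DefD[OF assms(2) F] by (simp add: B_def)
  have "{i\<in>C. sat M Xs (\<lambda>v. F v i) (\<lambda>_. {}) (Conj \<phi> \<psi>)} = A \<inter> B" by (auto simp: A_def B_def)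
  then show "sat UP {} (\<lambda>v. cl (F v)) (\<lambda>_. {}) (Conj \<phi> \<psi>) \<longleftrightarrow> {i\<in>C. sat M Xs (\<lambda>v. F v i) (\<lambda>_. {}) (Conj \<phi> \<psi>)} \<in> U"
    using LosD[OF assms(3) F] LosD[OF assms(4) F] U_int_iff[OF A B] by (simp add: A_def B_def)
qed

lemma E_upd: "(\<lambda>v. cl (F v))(x := cl g) = (\<lambda>v. cl ((F(x:=g)) v))"
  by (rule ext) simp
lemma env_upd: "(\<lambda>v. (F(x:=g)) v i) = (\<lambda>v. F v i)(x := g i)"
  by (rule ext) simp

lemma FS_upd: "\<forall>v. F v \<in> FS \<Longrightarrow> g \<in> FS \<Longrightarrow> \<forall>v. (F(x:=g)) v \<in> FS" by simp

lemma pairset: assumes F: "\<forall>v. F v \<in> FS" and D: "Def \<phi>"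
  shows "{p\<in>C. sat M Xs ((\<lambda>v. F v (p1 p))(x := p2 p)) (\<lambda>_. {}) \<phi>} \<in> Xs"
proof -
  define F' where "F' = (\<lambda>v. if v = x then P2 else fcomp (F v) P1)"
  have F': "\<forall>v. F' v \<in> FS" using F P1_Fs P2_Fs fcomp_Fs by (auto simp: F'_def)
  have e: "(\<lambda>v. F' v p) = (\<lambda>v. F v (p1 p))(x := p2 p)" if "p \<in> C" for p
    using that by (intro ext) (auto simp: F'_def fcomp_def P1_def P2_def)
  have "{p\<in>C. sat M Xs (\<lambda>v. F' v p) (\<lambda>_. {}) \<phi>} \<in> Xs" using DefD[OF D F'] .
  moreover have "{p\<in>C. sat M Xs (\<lambda>v. F' v p) (\<lambda>_. {}) \<phi>} = {p\<in>C. sat M Xs ((\<lambda>v. F v (p1 p))(x := p2 p)) (\<lambda>_. {}) \<phi>}"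
    using e by auto
  ultimately show ?thesis by simp
qed

lemma Los_Ex: assumes D1: "Def \<phi>" and D2: "Def (Ex x \<phi>)" and L: "Los \<phi>" shows "Los (Ex x \<phi>)"
  unfolding Los_def
proof (intro allI impI)
  fix F :: "nat \<Rightarrow> 'a \<Rightarrow> 'a" assume F: "\<forall>v. F v \<in> FS"
  define D where "D = {i\<in>C. sat M Xs (\<lambda>v. F v i) (\<lambda>_. {}) (Ex x \<phi>)}"
  have DX: "D \<in> Xs" using DefD[OF D2 F] by (simp add: D_def)
  have "sat UP {} (\<lambda>v. cl (F v)) (\<lambda>_. {}) (Ex x \<phi>) \<longleftrightarrow>
        (\<exists>g\<in>FS. sat UP {} (\<lambda>v. cl ((F(x:=g)) v)) (\<lambda>_. {}) \<phi>)"
    by (simp add: up_carr E_upd)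
  also have "\<dots> \<longleftrightarrow> (\<exists>g\<in>FS. {i\<in>C. sat M Xs ((\<lambda>v. F v i)(x := g i)) (\<lambda>_. {}) \<phi>} \<in> U)"
  proof (rule bex_cong[OF refl])
    fix g assume g: "g \<in> FS"
    show "sat UP {} (\<lambda>v. cl ((F(x:=g)) v)) (\<lambda>_. {}) \<phi> \<longleftrightarrow> {i\<in>C. sat M Xs ((\<lambda>v. F v i)(x := g i)) (\<lambda>_. {}) \<phi>} \<in> U"
      using LosD[OF L FS_upd[OF F g, of x]] unfolding env_upd .
  qed
  also have "\<dots> \<longleftrightarrow> D \<in> U"
  proof
    assume "\<exists>g\<in>FS. {i\<in>C. sat M Xs ((\<lambda>v. F v i)(x := g i)) (\<lambda>_. {}) \<phi>} \<in> U"
    then obtain g where g: "g \<in> FS" "{i\<in>C. sat M Xs ((\<lambda>v. F v i)(x := g i)) (\<lambda>_. {}) \<phi>} \<in> U" by blast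
    have "{i\<in>C. sat M Xs ((\<lambda>v. F v i)(x := g i)) (\<lambda>_. {}) \<phi>} \<subseteq> D"
      using g(1) FsC by (auto simp: D_def)
    then show "D \<in> U" using U_up g(2) DX by blast
  next
    assume DU: "D \<in> U"
    define R where "R i y = sat M Xs ((\<lambda>v. F v i)(x := y)) (\<lambda>_. {}) \<phi>" for i y
    have B: "{p\<in>C. R (p1 p) (p2 p)} \<in> Xs" unfolding R_def using pairset[OF F D1] .
    have DD: "{i\<in>C. \<exists>y\<in>C. R i y} = D" by (auto simp: D_def R_def)
    obtain g where g: "g \<in> FS" "\<forall>i\<in>C. (\<exists>y\<in>C. R i y) \<longrightarrow> R i (g i)"
      using choice[OF B] DD DX by auto
    have "D \<subseteq> {i\<in>C. sat M Xs ((\<lambda>v. F v i)(x := g i)) (\<lambda>_. {}) \<phi>}"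
      using g(2) DD unfolding R_def by auto
    moreover have "{i\<in>C. sat M Xs ((\<lambda>v. F v i)(x := g i)) (\<lambda>_. {}) \<phi>} \<in> Xs"
      using DefD[OF D1 FS_upd[OF F g(1), of x]] unfolding env_upd .
    ultimately show "\<exists>g\<in>FS. {i\<in>C. sat M Xs ((\<lambda>v. F v i)(x := g i)) (\<lambda>_. {}) \<phi>} \<in> U"
      using U_up DU g(1) by blast
  qed
  finally show "sat UP {} (\<lambda>v. cl (F v)) (\<lambda>_. {}) (Ex x \<phi>) \<longleftrightarrow> {i\<in>C. sat M Xs (\<lambda>v. F v i) (\<lambda>_. {}) (Ex x \<phi>)} \<in> U"
    by (simp add: D_def)
qed

lemma Los_BEx: assumes D1: "Def \<phi>" and D2: "Def (BEx x t \<phi>)" and L: "Los \<phi>" shows "Los (BEx x t \<phi>)"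
  unfolding Los_def
proof (intro allI impI)
  fix F :: "nat \<Rightarrow> 'a \<Rightarrow> 'a" assume F: "\<forall>v. F v \<in> FS"
  define D where "D = {i\<in>C. sat M Xs (\<lambda>v. F v i) (\<lambda>_. {}) (BEx x t \<phi>)}"
  have DX: "D \<in> Xs" using DefD[OF D2 F] by (simp add: D_def)
  have tfC: "tf F t i = ev M (\<lambda>v. F v i) t" if "i \<in> C" for i using that by (simp add: tf_def)
  have "sat UP {} (\<lambda>v. cl (F v)) (\<lambda>_. {}) (BEx x t \<phi>) \<longleftrightarrow>
        (\<exists>g\<in>FS. ls UP (cl g) (cl (tf F t)) \<and> sat UP {} (\<lambda>v. cl ((F(x:=g)) v)) (\<lambda>_. {}) \<phi>)"
    by (simp add: up_carr E_upd evU[OF F])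
  also have "\<dots> \<longleftrightarrow> (\<exists>g\<in>FS. ltset g (tf F t) \<in> U \<and> {i\<in>C. sat M Xs ((\<lambda>v. F v i)(x := g i)) (\<lambda>_. {}) \<phi>} \<in> U)"
  proof (rule bex_cong[OF refl])
    fix g assume g: "g \<in> FS"
    have "ls UP (cl g) (cl (tf F t)) \<longleftrightarrow> ltset g (tf F t) \<in> U" using up_ls[OF g tf_Fs[OF F]] .
    moreover have "sat UP {} (\<lambda>v. cl ((F(x:=g)) v)) (\<lambda>_. {}) \<phi> \<longleftrightarrow> {i\<in>C. sat M Xs ((\<lambda>v. F v i)(x := g i)) (\<lambda>_. {}) \<phi>} \<in> U"
      using LosD[OF L FS_upd[OF F g, of x]] unfolding env_upd .
    ultimately show "(ls UP (cl g) (cl (tf F t)) \<and> sat UP {} (\<lambda>v. cl ((F(x:=g)) v)) (\<lambda>_. {}) \<phi>) \<longleftrightarrow>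
      (ltset g (tf F t) \<in> U \<and> {i\<in>C. sat M Xs ((\<lambda>v. F v i)(x := g i)) (\<lambda>_. {}) \<phi>} \<in> U)" by simp
  qed
  also have "\<dots> \<longleftrightarrow> D \<in> U"
  proof
    assume "\<exists>g\<in>FS. ltset g (tf F t) \<in> U \<and> {i\<in>C. sat M Xs ((\<lambda>v. F v i)(x := g i)) (\<lambda>_. {}) \<phi>} \<in> U"
    then obtain g where g: "g \<in> FS" "ltset g (tf F t) \<in> U" "{i\<in>C. sat M Xs ((\<lambda>v. F v i)(x := g i)) (\<lambda>_. {}) \<phi>} \<in> U" by blast
    have "ltset g (tf F t) \<inter> {i\<in>C. sat M Xs ((\<lambda>v. F v i)(x := g i)) (\<lambda>_. {}) \<phi>} \<subseteq> D"
      using g(1) FsC tfC by (auto simp: D_def ltset_def)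
    then show "D \<in> U" using U_up U_int[OF g(2) g(3)] DX by blast
  next
    assume DU: "D \<in> U"
    define R where "R i y = (lt y (ev M (\<lambda>v. F v i) t) \<and> sat M Xs ((\<lambda>v. F v i)(x := y)) (\<lambda>_. {}) \<phi>)" for i y
    define G where "G = (\<lambda>v::nat. if v = 0 then P2 else fcomp (tf F t) P1)"
    have G: "\<forall>v. G v \<in> FS" using P2_Fs fcomp_Fs tf_Fs[OF F] P1_Fs by (auto simp: G_def)
    have B1: "{p\<in>C. sat M Xs (\<lambda>v. G v p) (\<lambda>_. {}) (Lt (Var 0) (Var 1))} \<in> Xs"
      using DefD[OF Def_delta0 G, of "Lt (Var 0) (Var 1)"] by simp
    have B1': "{p\<in>C. sat M Xs (\<lambda>v. G v p) (\<lambda>_. {}) (Lt (Var 0) (Var 1))} = {p\<in>C. lt (p2 p) (ev M (\<lambda>v. F v (p1 p)) t)}"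
      by (auto simp: G_def fcomp_def P1_def P2_def tf_def)
    have B2: "{p\<in>C. sat M Xs ((\<lambda>v. F v (p1 p))(x := p2 p)) (\<lambda>_. {}) \<phi>} \<in> Xs" using pairset[OF F D1] .
    have "{p\<in>C. R (p1 p) (p2 p)} = {p\<in>C. lt (p2 p) (ev M (\<lambda>v. F v (p1 p)) t)} \<inter> {p\<in>C. sat M Xs ((\<lambda>v. F v (p1 p))(x := p2 p)) (\<lambda>_. {}) \<phi>}"
      by (auto simp: R_def)
    then have B: "{p\<in>C. R (p1 p) (p2 p)} \<in> Xs" using Xs_inter B1 B1' B2 by auto
    have DD: "{i\<in>C. \<exists>y\<in>C. R i y} = D" by (auto simp: D_def R_def)
    obtain g where g: "g \<in> FS" "\<forall>i\<in>C. (\<exists>y\<in>C. R i y) \<longrightarrow> R i (g i)"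
      using choice[OF B] DD DX by auto
    have "D \<subseteq> ltset g (tf F t)" "D \<subseteq> {i\<in>C. sat M Xs ((\<lambda>v. F v i)(x := g i)) (\<lambda>_. {}) \<phi>}"
      using g(2) DD tfC unfolding R_def ltset_def by auto
    moreover have "{i\<in>C. sat M Xs ((\<lambda>v. F v i)(x := g i)) (\<lambda>_. {}) \<phi>} \<in> Xs"
      using DefD[OF D1 FS_upd[OF F g(1), of x]] unfolding env_upd .
    moreover have "ltset g (tf F t) \<in> Xs" using ltset_Xs g(1) tf_Fs[OF F] by auto
    ultimately show "\<exists>g\<in>FS. ltset g (tf F t) \<in> U \<and> {i\<in>C. sat M Xs ((\<lambda>v. F v i)(x := g i)) (\<lambda>_. {}) \<phi>} \<in> U"
      using U_up DU g(1) by blast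
  qed
  finally show "sat UP {} (\<lambda>v. cl (F v)) (\<lambda>_. {}) (BEx x t \<phi>) \<longleftrightarrow> {i\<in>C. sat M Xs (\<lambda>v. F v i) (\<lambda>_. {}) (BEx x t \<phi>)} \<in> U"
    by (simp add: D_def)
qed

lemma Los_All: assumes D1: "Def \<phi>" and D2: "Def (All x \<phi>)" and L: "Los \<phi>" shows "Los (All x \<phi>)"
proof -
  have DN: "Def (Neg \<phi>)" using Def_neg D1 by auto
  have DE: "Def (Ex x (Neg \<phi>))" by (rule Def_equiv[OF Def_neg[OF D2]]) simp
  have "Los (Neg (Ex x (Neg \<phi>)))"
    by (rule Los_Neg[OF DE Los_Ex[OF DN DE Los_Neg[OF D1 L]]])
  then show ?thesis by (rule Los_equiv) simp_all
qed

lemma Los_BAll: assumes D1: "Def \<phi>" and D2: "Def (BAll x t \<phi>)" and L: "Los \<phi>" shows "Los (BAll x t \<phi>)"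
proof -
  have DN: "Def (Neg \<phi>)" using Def_neg D1 by auto
  have DE: "Def (BEx x t (Neg \<phi>))" by (rule Def_equiv[OF Def_neg[OF D2]]) simp
  have "Los (Neg (BEx x t (Neg \<phi>)))"
    by (rule Los_Neg[OF DE Los_BEx[OF DN DE Los_Neg[OF D1 L]]])
  then show ?thesis by (rule Los_equiv) simp_all
qed

lemma Los_Disj: assumes "Def \<phi>" "Def \<psi>" "Los \<phi>" "Los \<psi>" shows "Los (Disj \<phi> \<psi>)"
proof -
  have "Los (Neg (Conj (Neg \<phi>) (Neg \<psi>)))"
    using assms by (intro Los_Neg Los_Conj Def_conj Def_neg) auto
  then show ?thesis by (rule Los_equiv) simp_all
qed

lemma Los_Impl: assumes "Def \<phi>" "Def \<psi>" "Los \<phi>" "Los \<psi>" shows "Los (Impl \<phi> \<psi>)"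
proof -
  have "Los (Neg (Conj \<phi> (Neg \<psi>)))"
    using assms by (intro Los_Neg Los_Conj Def_conj Def_neg) auto
  then show ?thesis by (rule Los_equiv) simp_all
qed

lemma Los_delta0: "delta0 \<phi> \<Longrightarrow> first_order \<phi> \<Longrightarrow> Los \<phi>"
proof (induction \<phi>)
  case (Eq s t) show ?case by (rule Los_Eq)
next
  case (Lt s t) show ?case by (rule Los_Lt)
next
  case (Neg \<phi>) then show ?case using Los_Neg Def_delta0 by auto
next
  case (Conj \<phi> \<psi>) then show ?case using Los_Conj Def_delta0 by auto
next
  case (Disj \<phi> \<psi>) then show ?case using Los_Disj Def_delta0 by auto
next
  case (Impl \<phi> \<psi>) then show ?case using Los_Impl Def_delta0 by auto
next
  case (BEx x t \<phi>)
  then show ?case using Los_BEx[of \<phi> x t] Def_delta0[of \<phi>] Def_delta0[of "BEx x t \<phi>"] by auto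
next
  case (BAll x t \<phi>)
  then show ?case using Los_BAll[of \<phi> x t] Def_delta0[of \<phi>] Def_delta0[of "BAll x t \<phi>"] by auto
qed auto

end


lemma allblock_fo: "first_order (allblock xs \<phi>) = first_order \<phi>"
  by (induction xs) (auto simp: allblock_def)

context base begin

fun dec :: "nat list \<Rightarrow> 'a \<Rightarrow> (nat \<Rightarrow> 'a) \<Rightarrow> (nat \<Rightarrow> 'a)" where
  "dec [] q e = e"
| "dec (y#ys) q e = (dec ys (p2 q) e)(y := p1 q)"

lemma dec_out: "v \<notin> set ys \<Longrightarrow> dec ys q e v = e v"
  by (induction ys arbitrary: q) auto

lemma dec_in: "v \<in> set ys \<Longrightarrow> dec ys q e v \<in> C"
  by (induction ys arbitrary: q) auto

lemma dec_code: "\<forall>v\<in>set ys. e' v \<in> C \<Longrightarrow> v \<in> set ys \<Longrightarrow> dec ys (ev M e' (codeT ys)) e v = e' v"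
proof (induction ys)
  case (Cons y ys)
  have c: "ev M e' (codeT ys) \<in> C" using codeT_C[of ys e'] Cons.prems(1) by auto
  have ey: "e' y \<in> C" using Cons.prems(1) by auto
  show ?case
  proof (cases "v = y")
    case True then show ?thesis using c ey by simp
  next
    case False
    then have "v \<in> set ys" using Cons.prems(2) by auto
    then show ?thesis using False c ey Cons.IH Cons.prems(1) by simp
  qed
qed simp

lemma dec_Fs: assumes K: "\<forall>w. K w \<in> FS" shows "H \<in> FS \<Longrightarrow> (\<lambda>p\<in>C. dec ys (H p) (\<lambda>w. K w p) v) \<in> FS"
proof (induction ys arbitrary: H)
  case Nil
  have "(\<lambda>p\<in>C. dec [] (H p) (\<lambda>w. K w p) v) = K v" using Fs_restrict[of "K v"] K by simp
  then show ?case using K by simp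
next
  case (Cons y ys)
  show ?case
  proof (cases "v = y")
    case True
    have "(\<lambda>p\<in>C. dec (y#ys) (H p) (\<lambda>w. K w p) v) = fcomp P1 H"
      using True Cons.prems FsC by (intro ext) (auto simp: fcomp_def P1_def)
    then show ?thesis using fcomp_Fs P1_Fs Cons.prems by simp
  next
    case False
    have "(\<lambda>p\<in>C. dec (y#ys) (H p) (\<lambda>w. K w p) v) = (\<lambda>p\<in>C. dec ys (fcomp P2 H p) (\<lambda>w. K w p) v)"
      using False Cons.prems FsC by (intro ext) (auto simp: fcomp_def P2_def)
    then show ?thesis using Cons.IH[of "fcomp P2 H"] fcomp_Fs P2_Fs Cons.prems by simp
  qed
qed

lemma up_emb: "uemb M Xs U a = cl (cst a)" by (simp add: uemb_def cst_def)

lemma carr_rep: "E \<in> carr UP \<Longrightarrow> \<exists>g\<in>FS. E = cl g" by (auto simp: up_carr)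

end

context full begin

lemma Los_sigma_pi:
  "sigma k \<phi> \<Longrightarrow> k \<le> n \<longrightarrow> first_order \<phi> \<longrightarrow> Los \<phi>"
  "pi k \<phi> \<Longrightarrow> k \<le> n \<longrightarrow> first_order \<phi> \<longrightarrow> Los \<phi>"
proof (induction rule: sigma_pi.inducts)
  case (sigma0 \<phi>) then show ?case using Los_delta0 by auto
next
  case (pi0 \<phi>) then show ?case using Los_delta0 by auto
next
  case (sigma_pi k \<phi>) then show ?case by auto
next
  case (sigma_ex k \<phi> x)
  show ?case
  proof (intro impI)
    assume "Suc k \<le> n" "first_order (Ex x \<phi>)"
    then show "Los (Ex x \<phi>)"
      using Los_Ex Def_sigma[of "Suc k" \<phi>] Def_sigma[of "Suc k" "Ex x \<phi>"] sigma_ex sigma_pi.sigma_ex by auto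
  qed
next
  case (pi_sigma k \<phi>) then show ?case by auto
next
  case (pi_all k \<phi> x)
  show ?case
  proof (intro impI)
    assume "Suc k \<le> n" "first_order (All x \<phi>)"
    then show "Los (All x \<phi>)"
      using Los_All Def_pi[of "Suc k" \<phi>] Def_pi[of "Suc k" "All x \<phi>"] pi_all sigma_pi.pi_all by auto
  qed
qed

lemma top_a: assumes s: "sigma n \<chi>" and fo: "first_order \<chi>" and F: "\<forall>v. F v \<in> FS"
  and H: "\<forall>i\<in>C. sat M Xs (\<lambda>v. F v i) (\<lambda>_. {}) (allblock ys \<chi>)"
  shows "sat UP {} (\<lambda>v. cl (F v)) (\<lambda>_. {}) (allblock ys \<chi>)"
  unfolding allblock_sat
proof (intro allI impI)
  fix E' assume E1: "\<forall>v\<in>set ys. E' v \<in> carr UP" and E2: "\<forall>v. v \<notin> set ys \<longrightarrow> E' v = cl (F v)"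
  define G where "G v = (if v \<in> set ys then (SOME g. g \<in> FS \<and> E' v = cl g) else F v)" for v
  have G: "G v \<in> FS \<and> E' v = cl (G v)" for v
  proof (cases "v \<in> set ys")
    case True
    then obtain g where "g \<in> FS" "E' v = cl g" using E1 carr_rep by blast
    then have "\<exists>g. g \<in> FS \<and> E' v = cl g" by blast
    then show ?thesis using True someI_ex[of "\<lambda>g. g \<in> FS \<and> E' v = cl g"] by (simp add: G_def)
  next
    case False then show ?thesis using E2 F by (simp add: G_def)
  qed
  have EG: "E' = (\<lambda>v. cl (G v))" using G by auto
  have GF: "\<forall>v. G v \<in> FS" using G by auto
  have L: "Los \<chi>" using Los_sigma_pi(1)[OF s] fo by auto
  have "{i\<in>C. sat M Xs (\<lambda>v. G v i) (\<lambda>_. {}) \<chi>} = C"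
  proof -
    have "sat M Xs (\<lambda>v. G v i) (\<lambda>_. {}) \<chi>" if i: "i \<in> C" for i
    proof -
      have A: "\<forall>e'. (\<forall>v\<in>set ys. e' v \<in> C) \<longrightarrow> (\<forall>v. v \<notin> set ys \<longrightarrow> e' v = F v i) \<longrightarrow> sat M Xs e' (\<lambda>_. {}) \<chi>"
        using H i unfolding allblock_sat by auto
      have B: "\<forall>v\<in>set ys. G v i \<in> C" using GF FsC i by auto
      have C': "\<forall>v. v \<notin> set ys \<longrightarrow> G v i = F v i" by (simp add: G_def)
      show ?thesis using A[rule_format, of "\<lambda>v. G v i"] B C' by blast
    qed
    then show ?thesis by auto
  qed
  then show "sat UP {} E' (\<lambda>_. {}) \<chi>" using LosD[OF L GF] EG by simp
qed

lemma top_b: assumes s: "sigma n \<chi>" and fo: "first_order \<chi>" and F: "\<forall>v. F v \<in> FS"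
  and H: "sat UP {} (\<lambda>v. cl (F v)) (\<lambda>_. {}) (allblock ys \<chi>)"
  shows "\<exists>i\<in>C. sat M Xs (\<lambda>v. F v i) (\<lambda>_. {}) (allblock ys \<chi>)"
proof (rule ccontr)
  assume N: "\<not> ?thesis"
  have L: "Los \<chi>" using Los_sigma_pi(1)[OF s] fo by auto
  have Dc: "Def \<chi>" using Def_sigma[OF s] fo by auto
  define R where "R i q = (\<not> sat M Xs (dec ys q (\<lambda>v. F v i)) (\<lambda>_. {}) \<chi>)" for i q
  define K where "K w = fcomp (F w) P1" for w
  have K: "\<forall>w. K w \<in> FS" using F fcomp_Fs P1_Fs by (auto simp: K_def)
  define G' where "G' v = (\<lambda>p\<in>C. dec ys (P2 p) (\<lambda>w. K w p) v)" for v
  have G': "\<forall>v. G' v \<in> FS" using dec_Fs[OF K P2_Fs] by (simp add: G'_def)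
  have G'p: "(\<lambda>v. G' v p) = dec ys (p2 p) (\<lambda>w. F w (p1 p))" if "p \<in> C" for p
    using that by (intro ext) (simp add: G'_def K_def fcomp_def P1_def P2_def)
  have "C - {p\<in>C. sat M Xs (\<lambda>v. G' v p) (\<lambda>_. {}) \<chi>} \<in> Xs" using Xs_compl DefD[OF Dc G'] by auto
  moreover have "C - {p\<in>C. sat M Xs (\<lambda>v. G' v p) (\<lambda>_. {}) \<chi>} = {p\<in>C. R (p1 p) (p2 p)}"
    using G'p by (auto simp: R_def)
  ultimately have B: "{p\<in>C. R (p1 p) (p2 p)} \<in> Xs" by simp
  have Dall: "\<exists>q\<in>C. R i q" if i: "i \<in> C" for i
  proof -
    have "\<not> sat M Xs (\<lambda>v. F v i) (\<lambda>_. {}) (allblock ys \<chi>)" using N i by auto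
    then obtain e' where e': "\<forall>v\<in>set ys. e' v \<in> C" "\<forall>v. v \<notin> set ys \<longrightarrow> e' v = F v i" "\<not> sat M Xs e' (\<lambda>_. {}) \<chi>"
      unfolding allblock_sat by auto
    define q where "q = ev M e' (codeT ys)"
    have "dec ys q (\<lambda>v. F v i) = e'"
    proof
      fix v show "dec ys q (\<lambda>v. F v i) v = e' v"
        using dec_code[OF e'(1)] dec_out e'(2) unfolding q_def by (cases "v \<in> set ys") auto
    qed
    moreover have "q \<in> C" unfolding q_def using codeT_C e'(1) by auto
    ultimately show ?thesis using e'(3) by (auto simp: R_def)
  qed
  have DC: "{i\<in>C. \<exists>q\<in>C. R i q} = C" using Dall by auto
  obtain g where g: "g \<in> FS" "\<forall>i\<in>C. (\<exists>q\<in>C. R i q) \<longrightarrow> R i (g i)"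
    using choice[OF B] DC by auto
  define G where "G v = (\<lambda>p\<in>C. dec ys (g p) (\<lambda>w. F w p) v)" for v
  have GF: "\<forall>v. G v \<in> FS" using dec_Fs[OF F g(1)] by (simp add: G_def)
  have Gout: "G v = F v" if "v \<notin> set ys" for v
    using that Fs_restrict[of "F v"] F by (simp add: G_def dec_out)
  have Gi: "(\<lambda>v. G v i) = dec ys (g i) (\<lambda>w. F w i)" if "i \<in> C" for i
    using that by (intro ext) (simp add: G_def)
  have "sat UP {} (\<lambda>v. cl (G v)) (\<lambda>_. {}) \<chi>"
    using H unfolding allblock_sat using GF Gout up_carr by auto
  then have "{i\<in>C. sat M Xs (\<lambda>v. G v i) (\<lambda>_. {}) \<chi>} \<in> U" using LosD[OF L GF] by simp
  moreover have "{i\<in>C. sat M Xs (\<lambda>v. G v i) (\<lambda>_. {}) \<chi>} = {}"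
    using g(2) Dall Gi by (auto simp: R_def)
  ultimately show False by simp
qed

lemma main:
  assumes s: "sigma (Suc (Suc n)) \<phi>" and fo: "first_order \<phi>" and e: "\<forall>v. e v \<in> C"
  shows "sat M Xs e (\<lambda>_. {}) \<phi> \<longleftrightarrow> sat UP {} (uemb M Xs U \<circ> e) (\<lambda>_. {}) \<phi>"
proof -
  obtain xs \<psi> where \<phi>: "\<phi> = exblock xs \<psi>" and p: "pi (Suc n) \<psi>" using sigma_SS_struct(1)[OF s] by auto
  obtain ys \<chi> where \<psi>: "\<psi> = allblock ys \<chi>" and sc: "sigma n \<chi>" using pi_S_struct(2)[OF p] by auto
  have fo\<chi>: "first_order \<chi>" using fo by (simp add: \<phi> \<psi> exblock_fo allblock_fo)
  have ue: "uemb M Xs U \<circ> e = (\<lambda>v. cl (cst (e v)))" by (auto simp: up_emb)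
  show ?thesis
  proof
    assume "sat M Xs e (\<lambda>_. {}) \<phi>"
    then obtain e' where e': "\<forall>v\<in>set xs. e' v \<in> C" "\<forall>v. v \<notin> set xs \<longrightarrow> e' v = e v" "sat M Xs e' (\<lambda>_. {}) \<psi>"
      unfolding \<phi> exblock_sat by auto
    have e'C: "\<forall>v. e' v \<in> C" using e' e by metis
    define F where "F v = cst (e' v)" for v
    have F: "\<forall>v. F v \<in> FS" using cst_Fs e'C by (simp add: F_def)
    have Fi: "(\<lambda>v. F v i) = e'" if "i \<in> C" for i using that by (intro ext) (simp add: F_def cst_def)
    have "sat UP {} (\<lambda>v. cl (F v)) (\<lambda>_. {}) \<psi>"
      unfolding \<psi> by (rule top_a[OF sc fo\<chi> F]) (use Fi e'(3) \<psi> in auto)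
    then show "sat UP {} (uemb M Xs U \<circ> e) (\<lambda>_. {}) \<phi>"
      unfolding \<phi> ue exblock_sat using e' cst_Fs e'C up_carr
      by (intro exI[of _ "\<lambda>v. cl (F v)"]) (auto simp: F_def)
  next
    assume "sat UP {} (uemb M Xs U \<circ> e) (\<lambda>_. {}) \<phi>"
    then obtain E' where E1: "\<forall>v\<in>set xs. E' v \<in> carr UP" and E2: "\<forall>v. v \<notin> set xs \<longrightarrow> E' v = cl (cst (e v))"
      and E3: "sat UP {} E' (\<lambda>_. {}) \<psi>"
      unfolding \<phi> ue exblock_sat by auto
    define G where "G v = (if v \<in> set xs then (SOME g. g \<in> FS \<and> E' v = cl g) else cst (e v))" for v
    have G: "G v \<in> FS \<and> E' v = cl (G v)" for v
    proof (cases "v \<in> set xs")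
      case True
      then obtain g where "g \<in> FS" "E' v = cl g" using E1 carr_rep by blast
      then have "\<exists>g. g \<in> FS \<and> E' v = cl g" by blast
      then show ?thesis using True someI_ex[of "\<lambda>g. g \<in> FS \<and> E' v = cl g"] by (simp add: G_def)
    next
      case False then show ?thesis using E2 e cst_Fs by (simp add: G_def)
    qed
    have EG: "E' = (\<lambda>v. cl (G v))" using G by auto
    have GF: "\<forall>v. G v \<in> FS" using G by auto
    obtain i where i: "i \<in> C" "sat M Xs (\<lambda>v. G v i) (\<lambda>_. {}) \<psi>"
      using top_b[OF sc fo\<chi> GF] E3 EG \<psi> by auto
    have "\<forall>v\<in>set xs. G v i \<in> C" using GF FsC i by auto
    moreover have "\<forall>v. v \<notin> set xs \<longrightarrow> G v i = e v" using i by (simp add: G_def cst_def)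
    ultimately show "sat M Xs e (\<lambda>_. {}) \<phi>"
      unfolding \<phi> exblock_sat using i(2) by (intro exI[of _ "\<lambda>v. G v i"]) auto
  qed
qed

end

theorem corollary3p7:
  fixes M :: "'a astr" and Xs :: "'a set set" and U :: "'a set set" and n :: nat
  assumes "rca0 M Xs"
    and "ultrafilter_on M Xs U"
    and "\<forall>A\<in>U. cofinal M A"
    and "sigma_comp M Xs n"
  shows "\<forall>\<phi> e. sigma (n + 2) \<phi> \<and> first_order \<phi> \<and> (\<forall>v. e v \<in> carr M) \<longrightarrow>
           (sat M Xs e (\<lambda>_. {}) \<phi> \<longleftrightarrow>
            sat (ultrapower M Xs U) {} (uemb M Xs U \<circ> e) (\<lambda>_. {}) \<phi>)"
proof -
  interpret full M Xs U n using assms by (unfold_locales) auto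
  show ?thesis using main by simp
qed



end
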